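(* Let $\mathcal{O}$ be a one-counter system with $n=|Q|$ states, and let $\alpha,\beta$ be configurations with counter value $0$ such that there exists an arc from $\alpha$ to $\beta$. Then there exists an arc $\rho$ from $\alpha$ to $\beta$ which is either low or normal. Moreover, if $\rho$ is normal, say $(S,T)$-normal, then it admits a normal decomposition $\rho=\rho_{\mathrm{pref}}\,\rho_{\mathrm{up}}\,\rho_{\mathrm{cap}}\,\rho_{\mathrm{down}}\,\rho_{\mathrm{suff}}$ with $\sigma_{\mathrm{up}}=\sigma^+_S$, $\sigma_{\mathrm{down}}=\sigma^-_T$ such that: (i) $\mathrm{proj}(\rho_{\mathrm{up}})=(\sigma_{\mathrm{up}})^a$ and $\mathrm{eff}(\sigma_{\mathrm{up}})=A$ for some $a,A\in\mathbb{N}$; (ii) $\mathrm{proj}(\rho_{\mathrm{down}})=(\sigma_{\mathrm{down}})^b$ and $\mathrm{eff}(\sigma_{\mathrm{down}})=-B$ for some $b,B\in\mathbb{N}$; (iii) $a\cdot A\le 2\,\mathrm{len}(\rho_{\mathrm{cap}})+2\,\mathrm{lcm}(A,B)$; (iv) $b\cdot B\le 2\,\mathrm{len}(\rho_{\mathrm{cap}})+2\,\mathrm{lcm}(A,B)$; (v) no infix (contiguous subsequence) of $\mathrm{proj}(\rho_{\mathrm{cap}})$ is a cycle whose effect is divisible by $\gcd(A,B)$; (vi) the counter value of the target of $\rho_{\mathrm{up}}$ and the counter value of the source of $\rho_{\mathrm{down}}$ are both greater than $n$; (vii) all configurations appearing on $\rho_{\mathrm{pref}}$ and on $\rho_{\mathrm{suff}}$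 (taken together) are pairwise different.
   Context: $\mathbb{N}=\{0,1,2,\dots\}$. A one-counter system (OCS) $\mathcal{O}$ consists of a finite set $Q$ of states, a set $T_{>0}\subseteq Q\times\{-1,0,1\}\times Q$ of non-zero transitions and a set $T_{=0}\subseteq Q\times\{0,1\}\times Q$ of zero tests. A configuration is a pair $(q,c)\in Q\times\mathbb{N}$ (state $q$, counter value $c$). A transition $t=(p,d,q)$ has source $p$, target $q$, effect $d$; it can be fired in $(p,c)$ if either $t\in T_{>0}$ and $c>0$, or $t\in T_{=0}$ and $c=0$, yielding $(q,c+d)$. A path is a sequence $(\gamma_1,t_1)\cdots(\gamma_m,t_m)$ such that, with some $\gamma_{m+1}$, firing $t_i$ in $\gamma_i$ yields $\gamma_{i+1}$ for all $i\le m$; its source is $\gamma_1$, target $\gamma_{m+1}$, length $\mathrm{len}=m$, configurations appearing on it are $\gamma_1,\dots,\gamma_{m+1}$, intermediate ones are $\gamma_2,\dots,\gamma_m$; its projection is $\mathrm{proj}=t_1\cdots t_m$ and its effect $\mathrm{eff}$ is the sum of the effects of its transitions. Paths are concatenated when the target of one is the source of the next. A sequence of transitions is consistent if each transition's target is the next one's source. A cycle is a consistent sequence of non-zero transitions starting and ending in the same state (its base state); positive/negative if its effect is positive/negative; simple if no state is visited twice except the base at start and end. The transition multigraph $G$ has vertices $Q$ and an edge $p\to q$ labelled $d$ for each $(p,d,q)\in T_{>0}$. A cycle is contained in an SCC $S$ of $G$ if all its states lie in $S$; $S$ is positively (negatively) enabled if it contains a positive (negative) cycle. For every positively enabled SCC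 $S$ one fixes, once and for all, a simple positive cycle $\sigma^+_S$ contained in $S$, and for every negatively enabled SCC $T$ a simple negative cycle $\sigma^-_T$ contained in $T$. An arc is a path whose source and target have counter value $0$ and whose intermediate configurations all have positive counter value. A path (or arc) is low if all configurations appearing on it (including the target) have counter value $<5n$. For SCCs $S,T$ of $G$, an arc $\rho$ is $(S,T)$-normal if it can be written as $\rho=\rho_{\mathrm{pref}}\rho_{\mathrm{up}}\rho_{\mathrm{cap}}\rho_{\mathrm{down}}\rho_{\mathrm{suff}}$ (a normal decomposition) where $\rho_{\mathrm{pref}},\rho_{\mathrm{suff}}$ are low, $\mathrm{proj}(\rho_{\mathrm{up}})=(\sigma^+_S)^k$ and $\mathrm{proj}(\rho_{\mathrm{down}})=(\sigma^-_T)^\ell$ for some $k,\ell\in\mathbb{N}$, the state of the source of $\rho_{\mathrm{cap}}$ is the base state of $\sigma^+_S$, and the state of the target of $\rho_{\mathrm{cap}}$ is the base state of $\sigma^-_T$. An arc is normal if it is $(S,T)$-normal for some SCCs $S,T$. *)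

theory Defs
  imports Main
begin

text \<open>An OCS is given by a state set Q and two transition sets Tpos (non-zero
transitions) and Tzero (zero tests).\<close>

type_synonym 'q trans = "'q \<times> int \<times> 'q"
type_synonym 'q conf = "'q \<times> nat"

definition src :: "'q trans \<Rightarrow> 'q" where "src t = fst t"
definition tgt :: "'q trans \<Rightarrow> 'q" where "tgt t = snd (snd t)"
definition deff :: "'q trans \<Rightarrow> int" where "deff t = fst (snd t)"

definition wf_ocs :: "'q set \<Rightarrow> 'q trans set \<Rightarrow> 'q trans set \<Rightarrow> bool" where
  "wf_ocs Q Tpos Tzero \<longleftrightarrow> finite Q \<and> Tpos \<subseteq> Q \<times> {-1,0,1} \<times> Q \<and> Tzero \<subseteq> Q \<times> {0,1} \<times> Q"

text \<open>A path is represented by its source configuration together with its projection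
(the sequence of fired transitions); all configurations on it are then determined.\<close>

fun is_path :: "'q trans set \<Rightarrow> 'q trans set \<Rightarrow> 'q conf \<Rightarrow> 'q trans list \<Rightarrow> bool" where
  "is_path Tpos Tzero \<gamma> [] = True"
| "is_path Tpos Tzero (q, c) (t # ts) =
     (src t = q \<and> ((t \<in> Tpos \<and> c > 0) \<or> (t \<in> Tzero \<and> c = 0)) \<and>
      is_path Tpos Tzero (tgt t, nat (int c + deff t)) ts)"

fun confs :: "'q conf \<Rightarrow> 'q trans list \<Rightarrow> 'q conf list" where
  "confs \<gamma> [] = [\<gamma>]"
| "confs (q, c) (t # ts) = (q, c) # confs (tgt t, nat (int c + deff t)) ts"

definition target :: "'q conf \<Rightarrow> 'q trans list \<Rightarrow> 'q conf" where
  "target \<gamma> ts = last (confs \<gamma> ts)"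

definition eff :: "'q trans list \<Rightarrow> int" where
  "eff ts = sum_list (map deff ts)"

definition consistent :: "'q trans list \<Rightarrow> bool" where
  "consistent ts \<longleftrightarrow> (\<forall>i. Suc i < length ts \<longrightarrow> tgt (ts ! i) = src (ts ! Suc i))"

definition is_cycle :: "'q trans set \<Rightarrow> 'q trans list \<Rightarrow> bool" where
  "is_cycle Tpos ts \<longleftrightarrow> ts \<noteq> [] \<and> set ts \<subseteq> Tpos \<and> consistent ts \<and> tgt (last ts) = src (hd ts)"

definition base :: "'q trans list \<Rightarrow> 'q" where
  "base ts = src (hd ts)"

definition simple_cycle :: "'q trans set \<Rightarrow> 'q trans list \<Rightarrow> bool" where
  "simple_cycle Tpos ts \<longleftrightarrow> is_cycle Tpos ts \<and> distinct (map src ts)"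

definition cycle_in :: "'q trans list \<Rightarrow> 'q set \<Rightarrow> bool" where
  "cycle_in ts S \<longleftrightarrow> set (map src ts) \<subseteq> S"

definition edges :: "'q trans set \<Rightarrow> ('q \<times> 'q) set" where
  "edges Tpos = {(p, q). \<exists>d. (p, d, q) \<in> Tpos}"

definition is_scc :: "'q set \<Rightarrow> 'q trans set \<Rightarrow> 'q set \<Rightarrow> bool" where
  "is_scc Q Tpos S \<longleftrightarrow>
     (\<exists>p\<in>Q. S = {q \<in> Q. (p, q) \<in> (edges Tpos)\<^sup>* \<and> (q, p) \<in> (edges Tpos)\<^sup>*})"

definition pos_enabled :: "'q trans set \<Rightarrow> 'q set \<Rightarrow> bool" where
  "pos_enabled Tpos S \<longleftrightarrow> (\<exists>ts. is_cycle Tpos ts \<and> cycle_in ts S \<and> eff ts > 0)"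

definition neg_enabled :: "'q trans set \<Rightarrow> 'q set \<Rightarrow> bool" where
  "neg_enabled Tpos S \<longleftrightarrow> (\<exists>ts. is_cycle Tpos ts \<and> cycle_in ts S \<and> eff ts < 0)"

definition good_choice :: "'q set \<Rightarrow> 'q trans set \<Rightarrow> ('q set \<Rightarrow> 'q trans list) \<Rightarrow>
    ('q set \<Rightarrow> 'q trans list) \<Rightarrow> bool" where
  "good_choice Q Tpos sigp sigm \<longleftrightarrow>
     (\<forall>S. is_scc Q Tpos S \<and> pos_enabled Tpos S \<longrightarrow>
        simple_cycle Tpos (sigp S) \<and> cycle_in (sigp S) S \<and> eff (sigp S) > 0) \<and>
     (\<forall>T. is_scc Q Tpos T \<and> neg_enabled Tpos T \<longrightarrow>
        simple_cycle Tpos (sigm T) \<and> cycle_in (sigm T) T \<and> eff (sigm T) < 0)"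

definition is_arc :: "'q trans set \<Rightarrow> 'q trans set \<Rightarrow> 'q conf \<Rightarrow> 'q trans list \<Rightarrow> bool" where
  "is_arc Tpos Tzero \<gamma> ts \<longleftrightarrow> is_path Tpos Tzero \<gamma> ts \<and> snd \<gamma> = 0 \<and> snd (target \<gamma> ts) = 0 \<and>
     (\<forall>i. 0 < i \<and> i < length ts \<longrightarrow> snd (confs \<gamma> ts ! i) > 0)"

definition low :: "nat \<Rightarrow> 'q conf \<Rightarrow> 'q trans list \<Rightarrow> bool" where
  "low n \<gamma> ts \<longleftrightarrow> (\<forall>x \<in> set (confs \<gamma> ts). snd x < 5 * n)"

text \<open>(S,T)-normal decomposition of the path (gamma, ts) into ts1 ts2 ts3 ts4 ts5
(pref, up, cap, down, suff).\<close>
definition normal_decomp ::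
  "'q set \<Rightarrow> 'q trans set \<Rightarrow> ('q set \<Rightarrow> 'q trans list) \<Rightarrow> ('q set \<Rightarrow> 'q trans list) \<Rightarrow>
   'q set \<Rightarrow> 'q set \<Rightarrow> 'q conf \<Rightarrow> 'q trans list \<Rightarrow>
   'q trans list \<Rightarrow> 'q trans list \<Rightarrow> 'q trans list \<Rightarrow> 'q trans list \<Rightarrow> 'q trans list \<Rightarrow> bool" where
  "normal_decomp Q Tpos sigp sigm S T \<gamma> ts ts1 ts2 ts3 ts4 ts5 \<longleftrightarrow>
     is_scc Q Tpos S \<and> pos_enabled Tpos S \<and> is_scc Q Tpos T \<and> neg_enabled Tpos T \<and>
     ts = ts1 @ ts2 @ ts3 @ ts4 @ ts5 \<and>
     low (card Q) \<gamma> ts1 \<and>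
     low (card Q) (target \<gamma> (ts1 @ ts2 @ ts3 @ ts4)) ts5 \<and>
     (\<exists>k. ts2 = concat (replicate k (sigp S))) \<and>
     (\<exists>l. ts4 = concat (replicate l (sigm T))) \<and>
     fst (target \<gamma> (ts1 @ ts2)) = base (sigp S) \<and>
     fst (target \<gamma> (ts1 @ ts2 @ ts3)) = base (sigm T)"

definition normal_arc ::
  "'q set \<Rightarrow> 'q trans set \<Rightarrow> 'q trans set \<Rightarrow> ('q set \<Rightarrow> 'q trans list) \<Rightarrow>
   ('q set \<Rightarrow> 'q trans list) \<Rightarrow> 'q conf \<Rightarrow> 'q trans list \<Rightarrow> bool" where
  "normal_arc Q Tpos Tzero sigp sigm \<gamma> ts \<longleftrightarrow> is_arc Tpos Tzero \<gamma> ts \<and>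
     (\<exists>S T ts1 ts2 ts3 ts4 ts5. normal_decomp Q Tpos sigp sigm S T \<gamma> ts ts1 ts2 ts3 ts4 ts5)"

end

theory Submission
  imports Defs
begin


fun chain :: "'q \<Rightarrow> 'q trans list \<Rightarrow> bool" where
  "chain q [] = True"
| "chain q (t # ts) = (src t = q \<and> chain (tgt t) ts)"

fun endst :: "'q \<Rightarrow> 'q trans list \<Rightarrow> 'q" where
  "endst q [] = q"
| "endst q (t # ts) = endst (tgt t) ts"

lemma confs_ne: "confs \<gamma> ts \<noteq> []"
  by (induction \<gamma> ts rule: confs.induct) auto

lemma length_confs[simp]: "length (confs \<gamma> ts) = Suc (length ts)"
  by (induction \<gamma> ts rule: confs.induct) auto

lemma target_Nil[simp]: "target \<gamma> [] = \<gamma>" by (simp add: target_def)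

lemma target_Cons[simp]: "target (q,c) (t#ts) = target (tgt t, nat (int c + deff t)) ts"
  by (simp add: target_def confs_ne)

lemma target_append: "target \<gamma> (xs @ ys) = target (target \<gamma> xs) ys"
  by (induction \<gamma> xs rule: confs.induct) auto

lemma is_path_append:
  "is_path Tp Tz \<gamma> (xs @ ys) = (is_path Tp Tz \<gamma> xs \<and> is_path Tp Tz (target \<gamma> xs) ys)"
  by (induction \<gamma> xs rule: confs.induct) auto

lemma confs_nth: "i \<le> length ts \<Longrightarrow> confs \<gamma> ts ! i = target \<gamma> (take i ts)"
proof (induction \<gamma> ts arbitrary: i rule: confs.induct)
  case (1 \<gamma>) then show ?case by simp
next
  case (2 q c t ts) then show ?case by (cases i) auto
qed

lemma set_confs: "set (confs \<gamma> ts) = {target \<gamma> (take i ts) | i. i \<le> length ts}"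
proof -
  have "set (confs \<gamma> ts) = {confs \<gamma> ts ! i | i. i < length (confs \<gamma> ts)}"
    by (simp add: set_conv_nth)
  also have "\<dots> = {target \<gamma> (take i ts) | i. i \<le> length ts}"
    by (auto simp: confs_nth less_Suc_eq_le) (metis confs_nth)
  finally show ?thesis .
qed

lemma eff_Nil[simp]: "eff [] = 0" by (simp add: eff_def)
lemma eff_Cons[simp]: "eff (t#ts) = deff t + eff ts" by (simp add: eff_def)
lemma eff_append[simp]: "eff (xs @ ys) = eff xs + eff ys" by (simp add: eff_def)
lemma eff_pow[simp]: "eff (concat (replicate k cy)) = int k * eff cy"
  by (induction k) (auto simp: algebra_simps)

lemma chain_append[simp]: "chain q (xs @ ys) = (chain q xs \<and> chain (endst q xs) ys)"
  by (induction q xs rule: endst.induct) auto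
lemma endst_append[simp]: "endst q (xs @ ys) = endst (endst q xs) ys"
  by (induction q xs rule: endst.induct) auto

lemma chain_pow: "chain q cy \<Longrightarrow> endst q cy = q \<Longrightarrow> chain q (concat (replicate k cy))"
  by (induction k) auto
lemma endst_pow: "endst q cy = q \<Longrightarrow> endst q (concat (replicate k cy)) = q"
  by (induction k) auto
lemma set_pow: "set (concat (replicate k cy)) \<subseteq> set cy"
  by (induction k) auto

lemma path_chain: "is_path Tp Tz (q,c) ts \<Longrightarrow> chain q ts"
  by (induction "(q,c)" ts arbitrary: q c rule: confs.induct) auto

lemma pp_mono: "is_path Tp {} \<gamma> ts \<Longrightarrow> is_path Tp Tz \<gamma> ts"
  by (induction \<gamma> ts rule: confs.induct) auto

lemma chain_consistent: "chain q ts \<Longrightarrow> consistent ts"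
proof (induction q ts rule: chain.induct)
  case (1 q) then show ?case by (simp add: consistent_def)
next
  case (2 q t ts)
  then show ?case
    by (cases ts) (auto simp: consistent_def nth_Cons split: nat.splits)
qed

lemma chain_hd: "chain q ts \<Longrightarrow> ts \<noteq> [] \<Longrightarrow> src (hd ts) = q"
  by (cases ts) auto

lemma chain_last: "chain q ts \<Longrightarrow> ts \<noteq> [] \<Longrightarrow> tgt (last ts) = endst q ts"
proof (induction q ts rule: chain.induct)
  case (2 q t ts) then show ?case by (cases ts) auto
qed simp

lemma chain_take_src: "chain q ts \<Longrightarrow> i < length ts \<Longrightarrow> src (ts ! i) = endst q (take i ts)"
proof (induction q ts arbitrary: i rule: chain.induct)
  case (1 q) then show ?case by simp
next
  case (2 q t ts) then show ?case by (cases i) auto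
qed

lemma consistent_chain: "consistent ts \<Longrightarrow> ts \<noteq> [] \<Longrightarrow> chain (src (hd ts)) ts"
proof (induction ts)
  case Nil then show ?case by simp
next
  case (Cons t ts)
  show ?case
  proof (cases ts)
    case Nil then show ?thesis by simp
  next
    case (Cons t' ts')
    have c: "consistent ts" using Cons.prems unfolding consistent_def
      by (metis Suc_less_eq length_Cons nth_Cons_Suc)
    have "tgt t = src t'" using Cons.prems Cons unfolding consistent_def by force
    then show ?thesis using Cons.IH[OF c] Cons by simp
  qed
qed

lemma cycle_chain: "is_cycle Tp cy \<Longrightarrow> chain (base cy) cy \<and> endst (base cy) cy = base cy"
  unfolding is_cycle_def base_def
  using consistent_chain chain_last by metis

locale ocs =
  fixes Q :: "'q set" and Tpos Tzero :: "'q trans set"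
  assumes wf: "wf_ocs Q Tpos Tzero"
begin

abbreviation pp where "pp \<equiv> is_path Tpos {}"

lemma finQ: "finite Q" using wf by (simp add: wf_ocs_def)

lemma Tpos_eff: "t \<in> Tpos \<Longrightarrow> -1 \<le> deff t \<and> deff t \<le> 1 \<and> src t \<in> Q \<and> tgt t \<in> Q"
  using wf by (auto simp: wf_ocs_def deff_def src_def tgt_def)

lemma Tzero_eff: "t \<in> Tzero \<Longrightarrow> 0 \<le> deff t \<and> deff t \<le> 1 \<and> src t \<in> Q \<and> tgt t \<in> Q"
  using wf by (auto simp: wf_ocs_def deff_def src_def tgt_def)

lemma path_target:
  "is_path Tpos Tzero (q,c) ts \<Longrightarrow> target (q,c) ts = (endst q ts, nat (int c + eff ts)) \<and> 0 \<le> int c + eff ts"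
proof (induction ts arbitrary: q c)
  case Nil then show ?case by simp
next
  case (Cons t ts)
  from Cons.prems have p: "is_path Tpos Tzero (tgt t, nat (int c + deff t)) ts" by simp
  have e: "int (nat (int c + deff t)) = int c + deff t"
    using Cons.prems Tpos_eff Tzero_eff by fastforce
  from Cons.IH[OF p] e show ?case by (simp add: add.assoc)
qed

lemma path_set: "is_path Tpos Tzero \<gamma> ts \<Longrightarrow> set ts \<subseteq> Tpos \<union> Tzero"
  by (induction \<gamma> ts rule: confs.induct) auto

lemma pp_target:
  "pp (q,c) ts \<Longrightarrow> target (q,c) ts = (endst q ts, nat (int c + eff ts)) \<and> 0 \<le> int c + eff ts"
  using path_target pp_mono by blast

lemma pp_char:
  "pp (q,c) ts \<longleftrightarrow> chain q ts \<and> set ts \<subseteq> Tpos \<and> (\<forall>i<length ts. 0 < int c + eff (take i ts))"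
proof (induction ts arbitrary: q c)
  case Nil then show ?case by simp
next
  case (Cons t ts)
  show ?case
  proof
    assume L: "pp (q,c) (t#ts)"
    hence t: "src t = q" "t \<in> Tpos" "0 < c" and r: "pp (tgt t, nat (int c + deff t)) ts" by auto
    have e: "int (nat (int c + deff t)) = int c + deff t" using Tpos_eff[OF t(2)] t(3) by simp
    from r Cons.IH have "chain (tgt t) ts \<and> set ts \<subseteq> Tpos \<and> (\<forall>i<length ts. 0 < int c + deff t + eff (take i ts))"
      using e by (simp add: add.assoc)
    then show "chain q (t#ts) \<and> set (t#ts) \<subseteq> Tpos \<and> (\<forall>i<length (t#ts). 0 < int c + eff (take i (t#ts)))"
      using t by (auto simp: less_Suc_eq_0_disj add.assoc)
  next
    assume R: "chain q (t#ts) \<and> set (t#ts) \<subseteq> Tpos \<and> (\<forall>i<length (t#ts). 0 < int c + eff (take i (t#ts)))"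
    hence t: "src t = q" "t \<in> Tpos" "chain (tgt t) ts" "set ts \<subseteq> Tpos" by auto
    from R have c0: "0 < int c" by (metis eff_Nil length_Cons take0 zero_less_Suc add_0_right)
    have e: "int (nat (int c + deff t)) = int c + deff t" using Tpos_eff[OF t(2)] c0 by simp
    have "\<forall>i<length ts. 0 < int c + deff t + eff (take i ts)"
    proof (intro allI impI)
      fix i assume "i < length ts"
      then have "0 < int c + eff (take (Suc i) (t#ts))" using R by (metis Suc_less_eq length_Cons)
      then show "0 < int c + deff t + eff (take i ts)" by (simp add: add.assoc)
    qed
    then have "pp (tgt t, nat (int c + deff t)) ts" using Cons.IH t e by (simp add: add.assoc)
    then show "pp (q,c) (t#ts)" using t c0 by simp
  qed
qed

lemma eff_bound: "set ts \<subseteq> Tpos \<Longrightarrow> - int (length ts) \<le> eff ts \<and> eff ts \<le> int (length ts)"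
proof (induction ts)
  case Nil then show ?case by simp
next
  case (Cons t ts) then show ?case using Tpos_eff[of t] by auto
qed

lemma pp_bounded: "chain q ts \<Longrightarrow> set ts \<subseteq> Tpos \<Longrightarrow> int (length ts) < int c \<Longrightarrow> pp (q,c) ts"
  unfolding pp_char
proof (intro conjI allI impI; assumption?)
  fix i assume "set ts \<subseteq> Tpos" "int (length ts) < int c" "i < length ts"
  moreover have "set (take i ts) \<subseteq> Tpos" using calculation(1) by (meson order.trans set_take_subset)
  ultimately show "0 < int c + eff (take i ts)" using eff_bound[of "take i ts"] by auto
qed

lemma pp_endbounded: "chain q ts \<Longrightarrow> set ts \<subseteq> Tpos \<Longrightarrow> int (length ts) < int c + eff ts \<Longrightarrow> pp (q,c) ts"
  unfolding pp_char
proof (intro conjI allI impI; assumption?)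
  fix i assume a: "set ts \<subseteq> Tpos" "int (length ts) < int c + eff ts" "i < length ts"
  have "set (drop i ts) \<subseteq> Tpos" using a(1) by (meson order.trans set_drop_subset)
  then have "eff (drop i ts) \<le> int (length ts - i)" using eff_bound[of "drop i ts"] by auto
  moreover have "eff ts = eff (take i ts) + eff (drop i ts)"
    by (metis append_take_drop_id eff_append)
  ultimately show "0 < int c + eff (take i ts)" using a by auto
qed

lemma pp_shift: "pp (q,c) ts \<Longrightarrow> c \<le> c' \<Longrightarrow> pp (q,c') ts"
  unfolding pp_char by force

lemma pp_pow:
  assumes "chain q cy" "endst q cy = q" "set cy \<subseteq> Tpos"
  shows "int (length cy) < int c \<Longrightarrow> int (length cy) < int c + int k * eff cy \<Longrightarrow>
    pp (q,c) (concat (replicate k cy))"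
proof (induction k arbitrary: c)
  case 0 then show ?case by simp
next
  case (Suc k)
  have p1: "pp (q,c) cy" using pp_bounded assms Suc.prems by blast
  have t1: "target (q,c) cy = (q, nat (int c + eff cy))" using pp_target[OF p1] assms by simp
  have l1: "int (length cy) < int c + eff cy"
  proof (cases "eff cy \<ge> 0")
    case True then show ?thesis using Suc.prems by simp
  next
    case False
    then have "int (Suc k) * eff cy \<le> eff cy" by (simp add: mult_le_cancel_right1)
    then show ?thesis using Suc.prems by simp
  qed
  have e: "int (nat (int c + eff cy)) = int c + eff cy" using l1 by simp
  have "pp (q, nat (int c + eff cy)) (concat (replicate k cy))"
    using Suc.IH[of "nat (int c + eff cy)"] e l1 Suc.prems by (simp add: algebra_simps)
  then show ?case using p1 t1 by (simp add: is_path_append)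
qed

end


lemma climb:
  fixes f :: "nat \<Rightarrow> int" and st :: "nat \<Rightarrow> 'q" and n L :: nat
  assumes step: "\<forall>i<L. \<bar>f (Suc i) - f i\<bar> \<le> 1"
    and f0: "f 0 \<le> 2 * int n" and fL: "f L = 4 * int n" and below: "\<forall>i<L. f i < 4 * int n"
    and stQ: "\<forall>i\<le>L. st i \<in> Q" and finQ: "finite Q" and cardQ: "card Q = n" and n1: "1 \<le> n"
  shows "\<exists>i j. i < j \<and> j \<le> L \<and> st i = st j \<and> f i < f j \<and> 2 * int n \<le> f i \<and> f i \<le> 3 * int n \<and>
     (\<forall>l. i \<le> l \<and> l \<le> j \<longrightarrow> f i \<le> f l)"
proof -
  define K where "K = {2*n..3*n}"
  define p where "p k = (GREATEST l. l \<le> L \<and> f l = int k)" for k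
  have ivt: "\<And>m v. m \<le> L \<Longrightarrow> f m \<le> v \<Longrightarrow> v \<le> f L \<Longrightarrow> \<exists>l. m \<le> l \<and> l \<le> L \<and> f l = v"
    using step by (intro nat_intermed_int_val) auto
  have pk: "p k \<le> L \<and> f (p k) = int k \<and> (\<forall>l. p k < l \<and> l \<le> L \<longrightarrow> int k < f l)" if "k \<in> K" for k
  proof -
    from that have kb: "f 0 \<le> int k" "int k \<le> f L" using f0 fL by (auto simp: K_def)
    then obtain l0 where l0: "l0 \<le> L" "f l0 = int k" using ivt[of 0 "int k"] by auto
    have P: "p k \<le> L \<and> f (p k) = int k" unfolding p_def
      using GreatestI_nat[of "\<lambda>l. l \<le> L \<and> f l = int k" l0 L] l0 by blast
    have G: "\<And>l. l \<le> L \<Longrightarrow> f l = int k \<Longrightarrow> l \<le> p k" unfolding p_def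
      using Greatest_le_nat[of "\<lambda>l. l \<le> L \<and> f l = int k" _ L] by blast
    have "int k < f l" if "p k < l" "l \<le> L" for l
    proof (rule ccontr)
      assume "\<not> int k < f l"
      then have "\<exists>l'. l \<le> l' \<and> l' \<le> L \<and> f l' = int k" using ivt[of l "int k"] that kb by auto
      then obtain l' where "l \<le> l'" "l' \<le> L" "f l' = int k" by blast
      then show False using G[of l'] that by auto
    qed
    then show ?thesis using P by auto
  qed
  have "\<not> inj_on (st \<circ> p) K"
  proof
    assume "inj_on (st \<circ> p) K"
    moreover have "(st \<circ> p) ` K \<subseteq> Q" using pk stQ by auto
    ultimately have "card K \<le> card Q" using card_inj_on_le finQ by blast
    then show False using cardQ n1 by (simp add: K_def)
  qed
  then obtain k1 k2 where k: "k1 \<in> K" "k2 \<in> K" "k1 \<noteq> k2" "st (p k1) = st (p k2)"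
    unfolding inj_on_def by auto
  have main: "\<exists>i j. i < j \<and> j \<le> L \<and> st i = st j \<and> f i < f j \<and> 2 * int n \<le> f i \<and> f i \<le> 3 * int n \<and>
     (\<forall>l. i \<le> l \<and> l \<le> j \<longrightarrow> f i \<le> f l)"
    if a: "ka \<in> K" "kb \<in> K" "ka < kb" "st (p ka) = st (p kb)" for ka kb
  proof -
    have A: "p ka \<le> L" "f (p ka) = int ka" "\<forall>l. p ka < l \<and> l \<le> L \<longrightarrow> int ka < f l" using pk a by auto
    have B: "p kb \<le> L" "f (p kb) = int kb" "\<forall>l. p kb < l \<and> l \<le> L \<longrightarrow> int kb < f l" using pk a by auto
    have lt: "p ka < p kb"
    proof (rule ccontr)
      assume "\<not> p ka < p kb"
      moreover have "p ka \<noteq> p kb" using A B a by auto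
      ultimately have "p kb < p ka" by auto
      then have "int kb < f (p ka)" using B A by auto
      then show False using A a by auto
    qed
    have "\<forall>l. p ka \<le> l \<and> l \<le> p kb \<longrightarrow> f (p ka) \<le> f l"
    proof (intro allI impI)
      fix l assume l: "p ka \<le> l \<and> l \<le> p kb"
      show "f (p ka) \<le> f l"
      proof (cases "l = p ka")
        case False
        then have "p ka < l" "l \<le> L" using l B(1) by auto
        then have "int ka < f l" using A(3) by blast
        then show ?thesis using A(2) by simp
      qed simp
    qed
    moreover have "2*n \<le> ka" "ka \<le> 3*n" using a(1) by (auto simp: K_def)
    then have "int (2*n) \<le> int ka" "int ka \<le> int (3*n)" by simp_all
    then have "2 * int n \<le> f (p ka)" "f (p ka) \<le> 3 * int n" using A(2) by simp_all
    ultimately show ?thesis using lt A B a by (intro exI[of _ "p ka"] exI[of _ "p kb"]) auto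
  qed
  show ?thesis
  proof (cases "k1 < k2")
    case True then show ?thesis using main k by blast
  next
    case False then show ?thesis using main[of k2 k1] k by auto
  qed
qed

context ocs begin

lemma arc_intro:
  assumes "is_path Tpos Tzero \<alpha> xs" "snd \<alpha> = 0"
    "\<forall>l. 0 < l \<and> l \<le> length xs \<longrightarrow> 0 < snd (target \<alpha> (take l xs))"
    "pp (target \<alpha> xs) ys" "snd (target \<alpha> (xs@ys)) = 0"
  shows "is_arc Tpos Tzero \<alpha> (xs@ys)"
  unfolding is_arc_def
proof (intro conjI allI impI)
  show "is_path Tpos Tzero \<alpha> (xs @ ys)" using assms pp_mono by (simp add: is_path_append)
  show "snd \<alpha> = 0" "snd (target \<alpha> (xs @ ys)) = 0" using assms by auto
  fix i assume i: "0 < i \<and> i < length (xs @ ys)"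
  have c: "confs \<alpha> (xs @ ys) ! i = target \<alpha> (take i (xs @ ys))" using i by (simp add: confs_nth)
  show "0 < snd (confs \<alpha> (xs @ ys) ! i)"
  proof (cases "i \<le> length xs")
    case True then show ?thesis using c assms(3) i by simp
  next
    case False
    obtain q c0 where qc: "target \<alpha> xs = (q,c0)" by fastforce
    define j where "j = i - length xs"
    have j: "j < length ys" using i False by (simp add: j_def)
    have tk: "take i (xs @ ys) = xs @ take j ys" using False by (simp add: j_def)
    have pj: "pp (q,c0) (take j ys)" using assms(4) qc
      by (metis append_take_drop_id is_path_append)
    have "0 < int c0 + eff (take j ys)" using assms(4) qc j by (simp add: pp_char)
    moreover have "target \<alpha> (take i (xs @ ys)) = target (q,c0) (take j ys)"
      using tk qc by (simp add: target_append)
    ultimately show ?thesis using c pp_target[OF pj] by simp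
  qed
qed

lemma path_pos_pp:
  "is_path Tpos Tzero \<gamma> ts \<Longrightarrow> (\<forall>j<length ts. 0 < snd (target \<gamma> (take j ts))) \<Longrightarrow> pp \<gamma> ts"
proof (induction \<gamma> ts rule: confs.induct)
  case (1 \<gamma>) then show ?case by simp
next
  case (2 q c t ts)
  have c0: "0 < c" using "2.prems"(2) by force
  have "\<forall>j<length ts. 0 < snd (target (tgt t, nat (int c + deff t)) (take j ts))"
  proof (intro allI impI)
    fix j assume "j < length ts"
    then have "0 < snd (target (q,c) (take (Suc j) (t#ts)))" using "2.prems"(2) by (metis Suc_less_eq length_Cons)
    then show "0 < snd (target (tgt t, nat (int c + deff t)) (take j ts))" by simp
  qed
  then show ?case using 2 c0 by auto
qed

lemma arc_pp:
  assumes "is_arc Tpos Tzero \<alpha> ts" "0 < i" "i \<le> length ts"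
  shows "pp (target \<alpha> (take i ts)) (drop i ts)"
proof (rule path_pos_pp)
  have "is_path Tpos Tzero \<alpha> ts" using assms by (simp add: is_arc_def)
  then show "is_path Tpos Tzero (target \<alpha> (take i ts)) (drop i ts)"
    by (metis append_take_drop_id is_path_append)
  show "\<forall>j<length (drop i ts). 0 < snd (target (target \<alpha> (take i ts)) (take j (drop i ts)))"
  proof (intro allI impI)
    fix j assume j: "j < length (drop i ts)"
    have "target (target \<alpha> (take i ts)) (take j (drop i ts)) = target \<alpha> (take (i+j) ts)"
      by (simp add: target_append[symmetric] take_add)
    also have "\<dots> = confs \<alpha> ts ! (i+j)" using j by (simp add: confs_nth)
    finally show "0 < snd (target (target \<alpha> (take i ts)) (take j (drop i ts)))"
      using assms j unfolding is_arc_def by auto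
  qed
qed

lemma endst_Q: "chain q ts \<Longrightarrow> q \<in> Q \<Longrightarrow> set ts \<subseteq> Tpos \<union> Tzero \<Longrightarrow> endst q ts \<in> Q"
  by (induction q ts rule: chain.induct) (auto dest: Tpos_eff Tzero_eff)

lemma path_level:
  assumes "is_path Tpos Tzero (q,0) ts" "l \<le> length ts"
  shows "int (snd (target (q,0) (take l ts))) = eff (take l ts) \<and> fst (target (q,0) (take l ts)) = endst q (take l ts)"
proof -
  have "is_path Tpos Tzero (q,0) (take l ts)" using assms by (metis append_take_drop_id is_path_append)
  from path_target[OF this] show ?thesis by simp
qed

lemma path_step:
  assumes "is_path Tpos Tzero \<gamma> ts" "l < length ts"
  shows "\<bar>eff (take (Suc l) ts) - eff (take l ts)\<bar> \<le> 1"
proof -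
  have "ts ! l \<in> set ts" using assms(2) by simp
  then have "ts ! l \<in> Tpos \<union> Tzero" using path_set[OF assms(1)] by blast
  then have "\<bar>deff (ts ! l)\<bar> \<le> 1" using Tpos_eff Tzero_eff by fastforce
  then show ?thesis using assms(2) by (simp add: take_Suc_conv_app_nth)
qed

lemma chain_edges: "chain q ts \<Longrightarrow> set ts \<subseteq> Tpos \<Longrightarrow> (q, endst q ts) \<in> (edges Tpos)\<^sup>*"
proof (induction q ts rule: chain.induct)
  case (1 q) then show ?case by simp
next
  case (2 q t ts)
  have "(q, tgt t) \<in> edges Tpos" using 2
    by (cases t) (auto simp: edges_def src_def tgt_def)
  then show ?case using 2 by (simp add: converse_rtrancl_into_rtrancl)
qed

lemma short_path:
  assumes "(p, q) \<in> (edges Tpos)\<^sup>*" "p \<in> Q"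
  shows "\<exists>P. chain p P \<and> set P \<subseteq> Tpos \<and> endst p P = q \<and> length P < card Q"
proof -
  define R where "R P \<longleftrightarrow> chain p P \<and> set P \<subseteq> Tpos \<and> endst p P = q" for P
  have "\<exists>P. chain p P \<and> set P \<subseteq> Tpos \<and> endst p P = q" using assms(1)
  proof (induction rule: rtrancl_induct)
    case base then show ?case by (auto intro: exI[of _ "[]"])
  next
    case (step y z)
    then obtain P where P: "chain p P \<and> set P \<subseteq> Tpos \<and> endst p P = y" by auto
    from step obtain d where d: "(y, d, z) \<in> Tpos" by (auto simp: edges_def)
    have "chain p (P @ [(y,d,z)]) \<and> set (P @ [(y,d,z)]) \<subseteq> Tpos \<and> endst p (P @ [(y,d,z)]) = z"
      using P d by (auto simp: src_def tgt_def)
    then show ?case by blast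
  qed
  then have "\<exists>P. R P" by (simp add: R_def)
  then obtain P where P: "R P" and min: "\<forall>P'. R P' \<longrightarrow> length P \<le> length P'"
    using ex_has_least_nat[of R _ length] by blast
  have "length P < card Q"
  proof (rule ccontr)
    assume ge: "\<not> length P < card Q"
    define vs where "vs = map (\<lambda>i. endst p (take i P)) [0..<Suc (length P)]"
    have "set vs \<subseteq> Q"
    proof
      fix v assume "v \<in> set vs"
      then obtain i where "v = endst p (take i P)" unfolding vs_def set_map by blast
      moreover have "chain p (take i P)" using P unfolding R_def by (metis append_take_drop_id chain_append)
      moreover have "set (take i P) \<subseteq> Tpos \<union> Tzero" using P unfolding R_def by (meson in_set_takeD subsetD UnI1 subsetI)
      ultimately show "v \<in> Q" using endst_Q assms(2) by blast
    qed
    have "\<not> distinct vs"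
    proof
      assume "distinct vs"
      then have "length vs \<le> card Q" using card_mono[OF finQ \<open>set vs \<subseteq> Q\<close>] distinct_card by metis
      then show False using ge by (simp add: vs_def)
    qed
    then obtain i j where ij: "i < length vs" "j < length vs" "i \<noteq> j" "vs ! i = vs ! j"
      by (auto simp: distinct_conv_nth)
    have "\<exists>i j. i < j \<and> j \<le> length P \<and> endst p (take i P) = endst p (take j P)"
    proof (cases "i < j")
      case True then show ?thesis using ij
        by (intro exI[of _ i] exI[of _ j]) (auto simp: vs_def nth_map_upt simp del: upt_Suc)
    next
      case False then show ?thesis using ij
        by (intro exI[of _ j] exI[of _ i]) (auto simp: vs_def nth_map_upt simp del: upt_Suc)
    qed
    then obtain i j where ij: "i < j" "j \<le> length P" "endst p (take i P) = endst p (take j P)" by blast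
    define P' where "P' = take i P @ drop j P"
    have c1: "chain p (take i P)" using P unfolding R_def by (metis append_take_drop_id chain_append)
    have c2: "chain (endst p (take j P)) (drop j P)" using P unfolding R_def by (metis append_take_drop_id chain_append)
    have e2: "endst (endst p (take j P)) (drop j P) = q" using P unfolding R_def by (metis append_take_drop_id endst_append)
    have "R P'" unfolding R_def P'_def using c1 c2 e2 ij P unfolding R_def
      by (auto dest: in_set_takeD in_set_dropD)
    moreover have "length P' < length P" using ij by (simp add: P'_def)
    ultimately show False using min by fastforce
  qed
  then show ?thesis using P R_def by blast
qed

end


lemma confs_hd: "hd (confs \<gamma> ts) = \<gamma>"
  by (induction \<gamma> ts rule: confs.induct) auto

lemma confs_append: "confs \<gamma> (xs @ ys) = butlast (confs \<gamma> xs) @ confs (target \<gamma> xs) ys"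
proof (induction \<gamma> xs rule: confs.induct)
  case (1 \<gamma>) then show ?case by simp
next
  case (2 q c t ts) then show ?case by (simp add: confs_ne)
qed

lemma set_confs_append:
  "set (confs \<gamma> (xs @ ys)) = set (confs \<gamma> xs) \<union> set (confs (target \<gamma> xs) ys)"
proof -
  have eq: "confs \<gamma> xs = butlast (confs \<gamma> xs) @ [target \<gamma> xs]"
    unfolding target_def using confs_ne by (rule append_butlast_last_id[symmetric])
  have e1: "set (confs \<gamma> xs) = set (butlast (confs \<gamma> xs)) \<union> {target \<gamma> xs}"
    by (subst eq) simp
  have m: "target \<gamma> xs \<in> set (confs (target \<gamma> xs) ys)"
    using hd_in_set[OF confs_ne] unfolding confs_hd .
  show ?thesis unfolding confs_append set_append e1 using m by blast
qed

lemma low_append: "low k \<gamma> (xs @ ys) \<longleftrightarrow> low k \<gamma> xs \<and> low k (target \<gamma> xs) ys"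
  unfolding low_def set_confs_append by auto

lemma take_append_target:
  "target \<gamma> (take l (xs @ ys)) = target (target \<gamma> (take l xs)) (take (l - length xs) ys)"
  by (simp add: target_append)

lemma cut_path:
  assumes "is_path Tp Tz \<gamma> u" "i < j" "j \<le> length u" "target \<gamma> (take i u) = target \<gamma> (take j u)"
  shows "is_path Tp Tz \<gamma> (take i u @ drop j u) \<and> target \<gamma> (take i u @ drop j u) = target \<gamma> u"
proof -
  have a: "is_path Tp Tz \<gamma> (take i u)" using assms(1) by (metis append_take_drop_id is_path_append)
  have b: "is_path Tp Tz (target \<gamma> (take j u)) (drop j u)" using assms(1) by (metis append_take_drop_id is_path_append)
  have c: "target (target \<gamma> (take j u)) (drop j u) = target \<gamma> u" by (metis append_take_drop_id target_append)
  show ?thesis using a b c assms(4) by (simp add: is_path_append target_append)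
qed

lemma cut_idx:
  assumes "i < j" "j \<le> length u" "target \<gamma> (take i u) = target \<gamma> (take j u)" "l \<le> length (take i u @ drop j u)"
  shows "\<exists>l'. l' \<le> length u \<and> (0 < l \<longrightarrow> 0 < l') \<and> target \<gamma> (take l (take i u @ drop j u)) = target \<gamma> (take l' u)"
proof (cases "l \<le> i")
  case True
  have li: "length (take i u) = i" using assms(1,2) by simp
  have "take l (take i u @ drop j u) = take l u" using True li by simp
  then show ?thesis using True assms(1,2) by (intro exI[of _ l]) simp
next
  case False
  have li: "length (take i u) = i" using assms(1,2) by simp
  have "take l (take i u @ drop j u) = take i u @ take (l - i) (drop j u)" using False li by simp
  then have "target \<gamma> (take l (take i u @ drop j u)) = target (target \<gamma> (take i u)) (take (l - i) (drop j u))"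
    by (simp add: target_append)
  also have "\<dots> = target \<gamma> (take j u @ take (l - i) (drop j u))" using assms(3) by (simp add: target_append)
  also have "take j u @ take (l - i) (drop j u) = take (j + (l - i)) u" by (simp add: take_add)
  finally have "target \<gamma> (take l (take i u @ drop j u)) = target \<gamma> (take (j + (l - i)) u)" .
  moreover have "j + (l - i) \<le> length u" using assms(4) li False by simp
  ultimately show ?thesis using False by (intro exI[of _ "j + (l - i)"]) simp
qed

lemma splice_idx:
  assumes "i \<le> length u" "j \<le> length w" "target \<gamma> (take i u) = target \<delta> (take j w)" "l \<le> i + (length w - j)"
  shows "(l \<le> i \<and> target \<gamma> (take l (take i u @ drop j w)) = target \<gamma> (take l u)) \<or>
         (\<exists>l'. l' \<le> length w \<and> target \<gamma> (take l (take i u @ drop j w)) = target \<delta> (take l' w))"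
proof (cases "l \<le> i")
  case True
  have li: "length (take i u) = i" using assms(1) by simp
  have "take l (take i u @ drop j w) = take l u" using True li by simp
  then have "target \<gamma> (take l (take i u @ drop j w)) = target \<gamma> (take l u)" by simp
  then show ?thesis using True by blast
next
  case False
  have li: "length (take i u) = i" using assms(1) by simp
  have "take l (take i u @ drop j w) = take i u @ take (l - i) (drop j w)" using False li by simp
  then have "target \<gamma> (take l (take i u @ drop j w)) = target (target \<gamma> (take i u)) (take (l - i) (drop j w))"
    by (simp add: target_append)
  also have "\<dots> = target \<delta> (take j w @ take (l - i) (drop j w))" using assms(3) by (simp add: target_append)
  also have "take j w @ take (l - i) (drop j w) = take (j + (l - i)) w" by (simp add: take_add)
  finally have "target \<gamma> (take l (take i u @ drop j w)) = target \<delta> (take (j + (l - i)) w)" .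
  moreover have "j + (l - i) \<le> length w" using assms(2,4) False by simp
  ultimately show ?thesis by blast
qed

context ocs begin

lemma pp_prefix:
  assumes "pp (q,c) ts" "j \<le> length ts"
  shows "pp (q,c) (take j ts) \<and> target (q,c) (take j ts) = (endst q (take j ts), nat (int c + eff (take j ts))) \<and>
         0 \<le> int c + eff (take j ts) \<and> - int j \<le> eff (take j ts) \<and> eff (take j ts) \<le> int j"
proof -
  have p: "pp (q,c) (take j ts)" using assms(1) by (metis append_take_drop_id is_path_append)
  have "set (take j ts) \<subseteq> Tpos" using p by (simp add: pp_char)
  then have "- int (length (take j ts)) \<le> eff (take j ts) \<and> eff (take j ts) \<le> int (length (take j ts))"
    by (rule eff_bound)
  moreover have "length (take j ts) = j" using assms(2) by simp
  ultimately show ?thesis using pp_target[OF p] p by simp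
qed

lemma pp_pos_prefix:
  assumes "pp (q,c) ts" "0 < snd (target (q,c) ts)" "0 < l" "l \<le> length ts"
  shows "0 < snd (target (q,c) (take l ts))"
proof (cases "l < length ts")
  case True
  then have "0 < int c + eff (take l ts)" using assms(1) by (simp add: pp_char)
  then show ?thesis using pp_prefix[OF assms(1), of l] assms by simp
next
  case False then show ?thesis using assms by simp
qed

lemma low_pp:
  assumes "pp (q,c) ts" "int c + int (length ts) < 5 * int k"
  shows "low k (q,c) ts"
proof -
  have H: "snd (target (q,c) (take l ts)) < 5*k" if "l \<le> length ts" for l
  proof -
    note P = pp_prefix[OF assms(1) that]
    have "int c + eff (take l ts) < int (5*k)" using P assms(2) that by linarith
    then show ?thesis using P by (simp add: nat_less_iff)
  qed
  show ?thesis unfolding low_def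
  proof
    fix x assume "x \<in> set (confs (q,c) ts)"
    then obtain l where x: "x = target (q,c) (take l ts)" and l: "l \<le> length ts" unfolding set_confs by blast
    show "snd x < 5 * k" unfolding x by (rule H[OF l])
  qed
qed

end

definition posp :: "'q conf \<Rightarrow> 'q trans list \<Rightarrow> bool" where
  "posp \<gamma> u \<longleftrightarrow> (\<forall>l. 0 < l \<and> l \<le> length u \<longrightarrow> 0 < snd (target \<gamma> (take l u)))"

lemma bez:
  fixes A B e :: int
  assumes "0 < A" "0 < B" "gcd A B dvd e"
  shows "\<exists>x y :: nat. int x * A - int y * B = e"
proof -
  obtain u v where uv: "u * A + v * B = gcd A B" using bezout_int by blast
  obtain r where r: "e = gcd A B * r" using assms(3) by (auto elim: dvdE)
  define x0 where "x0 = u * r"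
  define y0 where "y0 = - v * r"
  have "x0 * A - y0 * B = r * (u * A + v * B)" unfolding x0_def y0_def by (simp add: algebra_simps)
  then have e0: "x0 * A - y0 * B = e" using uv r by (simp add: mult.commute)
  define t where "t = \<bar>x0\<bar> + \<bar>y0\<bar>"
  have t0: "0 \<le> t" by (simp add: t_def)
  have "t \<le> t * B" using assms(2) t0 by (simp add: mult_le_cancel_left1)
  then have "\<bar>x0\<bar> \<le> t * B" by (simp add: t_def)
  then have x: "0 \<le> x0 + t * B" by linarith
  have "t \<le> t * A" using assms(1) t0 by (simp add: mult_le_cancel_left1)
  then have "\<bar>y0\<bar> \<le> t * A" by (simp add: t_def)
  then have y: "0 \<le> y0 + t * A" by linarith
  have h: "int (nat (x0 + t * B)) * A - int (nat (y0 + t * A)) * B = e"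
    using x y e0 by (simp add: algebra_simps)
  show ?thesis by (rule exI[of _ "nat (x0 + t*B)"], rule exI[of _ "nat (y0 + t*A)"], rule h)
qed



abbreviation pw :: "'q trans list \<Rightarrow> nat \<Rightarrow> 'q trans list" where "pw cy k \<equiv> concat (replicate k cy)"

locale ocs2 = ocs Q Tpos Tzero for Q :: "'q set" and Tpos Tzero +
  fixes sigp sigm :: "'q set \<Rightarrow> 'q trans list" and \<alpha> \<beta> :: "'q conf"
  assumes gc: "good_choice Q Tpos sigp sigm" and \<alpha>Q: "fst \<alpha> \<in> Q" and \<alpha>0: "snd \<alpha> = 0" and \<beta>0: "snd \<beta> = 0"
    and nolow: "\<not> (\<exists>ts. is_arc Tpos Tzero \<alpha> ts \<and> target \<alpha> ts = \<beta> \<and> low (card Q) \<alpha> ts)"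
begin

abbreviation "n \<equiv> card Q"

lemma n1: "1 \<le> n"
proof -
  have "Q \<noteq> {}" using \<alpha>Q by auto
  then show ?thesis using finQ by (simp add: Suc_le_eq card_gt_0_iff)
qed

lemma cyc_len: assumes "set cy \<subseteq> Tpos" "distinct (map src cy)" shows "length cy \<le> n"
proof -
  have "set (map src cy) \<subseteq> Q" using assms(1) Tpos_eff by auto
  then have "card (set (map src cy)) \<le> n" using card_mono finQ by blast
  moreover have "card (set (map src cy)) = length cy" using distinct_card[OF assms(2)] by simp
  ultimately show ?thesis by simp
qed

lemma sp_facts:
  assumes "is_scc Q Tpos S" "pos_enabled Tpos S"
  shows "chain (base (sigp S)) (sigp S) \<and> endst (base (sigp S)) (sigp S) = base (sigp S) \<and>
    set (sigp S) \<subseteq> Tpos \<and> length (sigp S) \<le> n \<and> 0 < eff (sigp S)"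
proof -
  have h: "simple_cycle Tpos (sigp S) \<and> cycle_in (sigp S) S \<and> eff (sigp S) > 0"
    using gc assms unfolding good_choice_def by blast
  then have c: "is_cycle Tpos (sigp S)" "distinct (map src (sigp S))" unfolding simple_cycle_def by auto
  then have "set (sigp S) \<subseteq> Tpos" unfolding is_cycle_def by auto
  then show ?thesis using h c cycle_chain[OF c(1)] cyc_len by auto
qed

lemma sm_facts:
  assumes "is_scc Q Tpos T" "neg_enabled Tpos T"
  shows "chain (base (sigm T)) (sigm T) \<and> endst (base (sigm T)) (sigm T) = base (sigm T) \<and>
    set (sigm T) \<subseteq> Tpos \<and> length (sigm T) \<le> n \<and> eff (sigm T) < 0"
proof -
  have h: "simple_cycle Tpos (sigm T) \<and> cycle_in (sigm T) T \<and> eff (sigm T) < 0"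
    using gc assms unfolding good_choice_def by blast
  then have c: "is_cycle Tpos (sigm T)" "distinct (map src (sigm T))" unfolding simple_cycle_def by auto
  then have "set (sigm T) \<subseteq> Tpos" unfolding is_cycle_def by auto
  then show ?thesis using h c cycle_chain[OF c(1)] cyc_len by auto
qed

definition candc where
 "candc S T u a m b w c1 c2 c3 c4 \<longleftrightarrow>
   is_scc Q Tpos S \<and> pos_enabled Tpos S \<and> is_scc Q Tpos T \<and> neg_enabled Tpos T \<and>
   is_path Tpos Tzero \<alpha> u \<and> posp \<alpha> u \<and> low n \<alpha> u \<and>
   target \<alpha> u = (base (sigp S), c1) \<and> n < c1 \<and> c1 \<le> 4*n \<and>
   int c2 = int c1 + int a * eff (sigp S) \<and>
   pp (base (sigp S), c2) m \<and> target (base (sigp S), c2) m = (base (sigm T), c3) \<and>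
   int c3 = int c4 - int b * eff (sigm T) \<and> n < c4 \<and> c4 \<le> 4*n \<and>
   pp (base (sigm T), c4) w \<and> target (base (sigm T), c4) w = \<beta> \<and> low n (base (sigm T), c4) w"

lemma cand_arc:
  assumes "candc S T u a m b w c1 c2 c3 c4"
  shows "is_arc Tpos Tzero \<alpha> (u @ pw (sigp S) a @ m @ pw (sigm T) b @ w) \<and>
    target \<alpha> (u @ pw (sigp S) a @ m @ pw (sigm T) b @ w) = \<beta> \<and>
    target \<alpha> (u @ pw (sigp S) a) = (base (sigp S), c2) \<and>
    target \<alpha> (u @ pw (sigp S) a @ m) = (base (sigm T), c3) \<and>
    target \<alpha> (u @ pw (sigp S) a @ m @ pw (sigm T) b) = (base (sigm T), c4)"
proof -
  note C = assms[unfolded candc_def]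
  have SP: "chain (base (sigp S)) (sigp S)" "endst (base (sigp S)) (sigp S) = base (sigp S)"
    "set (sigp S) \<subseteq> Tpos" "length (sigp S) \<le> n" "0 < eff (sigp S)" using sp_facts C by auto
  have SM: "chain (base (sigm T)) (sigm T)" "endst (base (sigm T)) (sigm T) = base (sigm T)"
    "set (sigm T) \<subseteq> Tpos" "length (sigm T) \<le> n" "eff (sigm T) < 0" using sm_facts C by auto
  have ae: "0 \<le> int a * eff (sigp S)" using SP by simp
  have L1: "int (length (sigp S)) < int c1" using SP C by simp
  have p1: "pp (base (sigp S), c1) (pw (sigp S) a)"
    by (rule pp_pow[OF SP(1,2,3)]) (use L1 ae in linarith)+
  have c2e: "int c1 + int a * eff (sigp S) = int c2" using C by simp
  have t1: "target (base (sigp S), c1) (pw (sigp S) a) = (base (sigp S), c2)"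
    using pp_target[OF p1] endst_pow[OF SP(2)] c2e by simp
  have be: "int b * eff (sigm T) \<le> 0" using SM by (simp add: mult_nonneg_nonpos)
  have L3: "int (length (sigm T)) < int c4" using SM C by simp
  have p3: "pp (base (sigm T), c3) (pw (sigm T) b)"
    by (rule pp_pow[OF SM(1,2,3)]) (use L3 be C in linarith)+
  have c4e: "int c3 + int b * eff (sigm T) = int c4" using C by simp
  have t3: "target (base (sigm T), c3) (pw (sigm T) b) = (base (sigm T), c4)"
    using pp_target[OF p3] endst_pow[OF SM(2)] c4e by simp
  have pr: "pp (target \<alpha> u) (pw (sigp S) a @ m @ pw (sigm T) b @ w)"
    using C p1 t1 p3 t3 by (simp add: is_path_append)
  have tr: "target \<alpha> (u @ pw (sigp S) a @ m @ pw (sigm T) b @ w) = \<beta>"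
    using C t1 t3 by (simp add: target_append)
  have arc: "is_arc Tpos Tzero \<alpha> (u @ pw (sigp S) a @ m @ pw (sigm T) b @ w)"
    by (rule arc_intro) (use C pr tr \<alpha>0 \<beta>0 in \<open>auto simp: posp_def\<close>)
  show ?thesis using arc tr C t1 t3 by (simp add: target_append)
qed

lemma rep1:
  assumes "candc S T u a (m1 @ v @ m2) b w c1 c2 c3 c4" "is_cycle Tpos v"
    "int x * eff (sigp S) + int y * eff (sigm T) = eff v"
  shows "\<exists>c2' c3'. candc S T u (a + x) (m1 @ m2) (b + y) w c1 c2' c3' c4"
proof -
  note C = assms(1)[unfolded candc_def]
  have SP: "0 < eff (sigp S)" using sp_facts C by auto
  have SM: "eff (sigm T) < 0" using sm_facts C by auto
  define bS where "bS = base (sigp S)"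
  define bT where "bT = base (sigm T)"
  have P: "pp (bS, c2) (m1 @ v @ m2)" "target (bS, c2) (m1 @ v @ m2) = (bT, c3)"
    using C by (auto simp: bS_def bT_def)
  obtain s1 d1 where t1: "target (bS, c2) m1 = (s1, d1)" by fastforce
  have p1: "pp (bS, c2) m1" and pv: "pp (s1, d1) v" and p2': "pp (target (s1,d1) v) m2"
    using P t1 by (auto simp: is_path_append)
  have e1: "s1 = endst bS m1" "int d1 = int c2 + eff m1" using pp_target[OF p1] t1 by auto
  have ch: "chain s1 v" using pv by (simp add: pp_char)
  have "s1 = base v" using chain_hd[OF ch] assms(2) by (auto simp: is_cycle_def base_def)
  then have ev: "endst s1 v = s1" using cycle_chain[OF assms(2)] by simp
  define d2 where "d2 = nat (int d1 + eff v)"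
  have tv: "target (s1, d1) v = (s1, d2)" and d2: "int d2 = int d1 + eff v"
    using pp_target[OF pv] ev by (auto simp: d2_def)
  have p2: "pp (s1, d2) m2" using p2' tv by simp
  have t2: "target (s1, d2) m2 = (bT, c3)" using P t1 tv by (simp add: target_append)
  have e2: "bT = endst s1 m2" "int c3 = int d2 + eff m2" using pp_target[OF p2] t2 by auto
  define c2' where "c2' = nat (int c2 + int x * eff (sigp S))"
  have c2': "int c2' = int c2 + int x * eff (sigp S)" using SP by (simp add: c2'_def)
  define c3' where "c3' = nat (int c3 - int y * eff (sigm T))"
  have yb: "0 \<le> - int y * eff (sigm T)" using SM by (simp add: mult_nonneg_nonpos)
  have c3': "int c3' = int c3 - int y * eff (sigm T)" using yb by (simp add: c3'_def)
  have "0 \<le> int x * eff (sigp S)" using SP by simp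
  then have "c2 \<le> c2'" using c2' by linarith
  then have q1: "pp (bS, c2') m1" using pp_shift[OF p1] by simp
  define d1' where "d1' = nat (int c2' + eff m1)"
  have t1': "target (bS, c2') m1 = (s1, d1')" using pp_target[OF q1] e1 by (simp add: d1'_def)
  have d1': "int d1' = int d1 + int x * eff (sigp S)" using pp_target[OF q1] e1 c2' by (simp add: d1'_def)
  have "d2 \<le> d1'" using d1' d2 assms(3) yb by linarith
  then have q2: "pp (s1, d1') m2" using pp_shift[OF p2] by simp
  have t2': "target (s1, d1') m2 = (bT, c3')" using pp_target[OF q2] e2 d1' d2 c3' assms(3) by simp
  have "pp (bS, c2') (m1 @ m2)" using q1 t1' q2 by (simp add: is_path_append)
  moreover have "target (bS, c2') (m1 @ m2) = (bT, c3')" using t1' t2' by (simp add: target_append)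
  moreover have "int c2' = int c1 + int (a + x) * eff (sigp S)" using c2' C by (simp add: algebra_simps)
  moreover have "int c3' = int c4 - int (b + y) * eff (sigm T)" using c3' C by (simp add: algebra_simps)
  ultimately have "candc S T u (a + x) (m1 @ m2) (b + y) w c1 c2' c3' c4"
    using C unfolding candc_def bS_def bT_def by auto
  then show ?thesis by blast
qed

lemma rep2:
  assumes "candc S T u a m b w c1 c2 c3 c4" "int pA * eff (sigp S) = l" "- int pB * eff (sigm T) = l"
    "pA \<le> a" "pB \<le> b" "int (length m) + l < int c2 \<or> int (length m) + l < int c3"
  shows "\<exists>c2' c3'. candc S T u (a - pA) m (b - pB) w c1 c2' c3' c4"
proof -
  note C = assms(1)[unfolded candc_def]
  have SP: "0 < eff (sigp S)" using sp_facts C by auto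
  have SM: "eff (sigm T) < 0" using sm_facts C by auto
  define bS where "bS = base (sigp S)"
  define bT where "bT = base (sigm T)"
  have P: "pp (bS, c2) m" "target (bS, c2) m = (bT, c3)" using C by (auto simp: bS_def bT_def)
  have e: "bT = endst bS m" "int c3 = int c2 + eff m" using pp_target[OF P(1)] P(2) by auto
  have ch: "chain bS m" "set m \<subseteq> Tpos" using P(1) by (auto simp: pp_char)
  have aa: "int pA * eff (sigp S) \<le> int a * eff (sigp S)" using assms(4) SP by simp
  have bb: "int pB * eff (sigm T) \<ge> int b * eff (sigm T)" using assms(5) SM by simp
  define c2' where "c2' = nat (int c2 - l)"
  define c3' where "c3' = nat (int c3 - l)"
  have c2': "int c2' = int c2 - l" using C aa assms(2) by (simp add: c2'_def)
  have c3': "int c3' = int c3 - l" using C bb assms(3) by (simp add: c3'_def)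
  have q: "pp (bS, c2') m"
  proof (cases "int (length m) + l < int c2")
    case True then show ?thesis using pp_bounded[OF ch] c2' by simp
  next
    case False then show ?thesis using assms(6) pp_endbounded[OF ch] c2' e by simp
  qed
  have t: "target (bS, c2') m = (bT, c3')" using pp_target[OF q] e c2' c3' by simp
  have "int c2' = int c1 + int (a - pA) * eff (sigp S)" using c2' C assms(2,4) by (simp add: algebra_simps of_nat_diff)
  moreover have "int c3' = int c4 - int (b - pB) * eff (sigm T)" using c3' C assms(3,5) by (simp add: algebra_simps of_nat_diff)
  ultimately have "candc S T u (a - pA) m (b - pB) w c1 c2' c3' c4"
    using C q t unfolding candc_def bS_def bT_def by auto
  then show ?thesis by blast
qed

lemma rep4:
  assumes "candc S T u a m b w c1 c2 c3 c4" "1 \<le> a" "int c1 + eff (sigp S) < int c4"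
  shows "\<exists>c1'. candc S T (u @ sigp S) (a - 1) m b w c1' c2 c3 c4"
proof -
  note C = assms(1)[unfolded candc_def]
  have SP: "chain (base (sigp S)) (sigp S)" "endst (base (sigp S)) (sigp S) = base (sigp S)"
    "set (sigp S) \<subseteq> Tpos" "length (sigp S) \<le> n" "0 < eff (sigp S)" using sp_facts C by auto
  define bS where "bS = base (sigp S)"
  define c1' where "c1' = nat (int c1 + eff (sigp S))"
  have c1': "int c1' = int c1 + eff (sigp S)" using SP by (simp add: c1'_def)
  have p: "pp (bS, c1) (sigp S)" using pp_bounded[OF SP(1,3)] SP(4) C by (simp add: bS_def)
  have t: "target (bS, c1) (sigp S) = (bS, c1')" using pp_target[OF p] SP(2) by (simp add: bS_def c1'_def)
  have tu: "target \<alpha> u = (bS, c1)" using C by (simp add: bS_def)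
  have path: "is_path Tpos Tzero \<alpha> (u @ sigp S)" using C tu p pp_mono by (simp add: is_path_append)
  have pos: "posp \<alpha> (u @ sigp S)" unfolding posp_def
  proof (intro allI impI)
    fix l assume l: "0 < l \<and> l \<le> length (u @ sigp S)"
    show "0 < snd (target \<alpha> (take l (u @ sigp S)))"
    proof (cases "l \<le> length u")
      case True then show ?thesis using C l by (simp add: posp_def)
    next
      case False
      then have "target \<alpha> (take l (u @ sigp S)) = target (bS, c1) (take (l - length u) (sigp S))"
        using tu by (simp add: target_append)
      moreover have "0 < snd (target (bS, c1) (take (l - length u) (sigp S)))"
        by (rule pp_pos_prefix[OF p]) (use t c1' C SP False l in auto)
      ultimately show ?thesis by simp
    qed
  qed
  have "low n (bS, c1) (sigp S)" by (rule low_pp[OF p]) (use SP assms(3) C in auto)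
  then have low: "low n \<alpha> (u @ sigp S)" using C tu by (simp add: low_append)
  have "int c2 = int c1' + int (a - 1) * eff (sigp S)" using C c1' assms(2) by (simp add: algebra_simps of_nat_diff)
  then have "candc S T (u @ sigp S) (a - 1) m b w c1' c2 c3 c4"
    using C path pos low t tu c1' SP assms(3) unfolding candc_def bS_def by (auto simp: target_append)
  then show ?thesis by blast
qed

lemma rep4b:
  assumes "candc S T u a m b w c1 c2 c3 c4" "1 \<le> b" "int c4 - eff (sigm T) < int c1"
  shows "\<exists>c4'. candc S T u a m (b - 1) (sigm T @ w) c1 c2 c3 c4'"
proof -
  note C = assms(1)[unfolded candc_def]
  have SM: "chain (base (sigm T)) (sigm T)" "endst (base (sigm T)) (sigm T) = base (sigm T)"
    "set (sigm T) \<subseteq> Tpos" "length (sigm T) \<le> n" "eff (sigm T) < 0" using sm_facts C by auto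
  define bT where "bT = base (sigm T)"
  define c4' where "c4' = nat (int c4 - eff (sigm T))"
  have c4': "int c4' = int c4 - eff (sigm T)" using SM by (simp add: c4'_def)
  have "int (length (sigm T)) < int c4'" using SM C c4' by simp
  then have p: "pp (bT, c4') (sigm T)" using pp_bounded[OF SM(1,3)] by (simp add: bT_def)
  have t: "target (bT, c4') (sigm T) = (bT, c4)" using pp_target[OF p] SM(2) c4' by (simp add: bT_def)
  have "low n (bT, c4') (sigm T)" by (rule low_pp[OF p]) (use SM assms(3) C c4' in auto)
  then have low: "low n (bT, c4') (sigm T @ w)" using C t by (simp add: low_append bT_def)
  have pw: "pp (bT, c4') (sigm T @ w)" using p t C by (simp add: is_path_append bT_def)
  have tw: "target (bT, c4') (sigm T @ w) = \<beta>" using t C by (simp add: target_append bT_def)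
  have "int c3 = int c4' - int (b - 1) * eff (sigm T)" using C c4' assms(2) by (simp add: algebra_simps of_nat_diff)
  then have "candc S T u a m (b - 1) (sigm T @ w) c1 c2 c3 c4'"
    using C low pw tw c4' SM assms(3) unfolding candc_def bT_def by auto
  then show ?thesis by blast
qed

lemma rep3u:
  assumes "candc S T u a m b w c1 c2 c3 c4" "i < j" "j \<le> length u" "target \<alpha> (take i u) = target \<alpha> (take j u)"
  shows "candc S T (take i u @ drop j u) a m b w c1 c2 c3 c4"
proof -
  note C = assms(1)[unfolded candc_def]
  have cp: "is_path Tpos Tzero \<alpha> (take i u @ drop j u) \<and> target \<alpha> (take i u @ drop j u) = target \<alpha> u"
    using cut_path[OF _ assms(2-4)] C by blast
  have pos: "posp \<alpha> (take i u @ drop j u)" unfolding posp_def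
  proof (intro allI impI)
    fix l assume l: "0 < l \<and> l \<le> length (take i u @ drop j u)"
    then obtain l' where "l' \<le> length u" "0 < l'" "target \<alpha> (take l (take i u @ drop j u)) = target \<alpha> (take l' u)"
      using cut_idx[OF assms(2-4)] by blast
    then show "0 < snd (target \<alpha> (take l (take i u @ drop j u)))" using C by (simp add: posp_def)
  qed
  have low: "low n \<alpha> (take i u @ drop j u)" unfolding low_def
  proof
    fix x assume "x \<in> set (confs \<alpha> (take i u @ drop j u))"
    then obtain l where l: "l \<le> length (take i u @ drop j u)" "x = target \<alpha> (take l (take i u @ drop j u))"
      unfolding set_confs by blast
    then obtain l' where "l' \<le> length u" "x = target \<alpha> (take l' u)" using cut_idx[OF assms(2-4)] by metis
    then have "x \<in> set (confs \<alpha> u)" unfolding set_confs by blast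
    then show "snd x < 5 * n" using C by (simp add: low_def)
  qed
  show ?thesis using C cp pos low unfolding candc_def by auto
qed

lemma rep3w:
  assumes "candc S T u a m b w c1 c2 c3 c4" "i < j" "j \<le> length w"
    "target (base (sigm T), c4) (take i w) = target (base (sigm T), c4) (take j w)"
  shows "candc S T u a m b (take i w @ drop j w) c1 c2 c3 c4"
proof -
  note C = assms(1)[unfolded candc_def]
  define \<gamma> where "\<gamma> = (base (sigm T), c4)"
  have cp: "pp \<gamma> (take i w @ drop j w) \<and> target \<gamma> (take i w @ drop j w) = target \<gamma> w"
    using cut_path[of Tpos "{}" \<gamma> w i j] C assms(2-4) by (simp add: \<gamma>_def)
  have low: "low n \<gamma> (take i w @ drop j w)" unfolding low_def
  proof
    fix x assume "x \<in> set (confs \<gamma> (take i w @ drop j w))"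
    then obtain l where l: "l \<le> length (take i w @ drop j w)" "x = target \<gamma> (take l (take i w @ drop j w))"
      unfolding set_confs by blast
    then obtain l' where "l' \<le> length w" "x = target \<gamma> (take l' w)"
      using cut_idx[OF assms(2,3), of \<gamma>] assms(4) by (metis \<gamma>_def)
    then have "x \<in> set (confs \<gamma> w)" unfolding set_confs by blast
    then show "snd x < 5 * n" using C by (simp add: low_def \<gamma>_def)
  qed
  show ?thesis using C cp low unfolding candc_def \<gamma>_def by auto
qed

lemma cross:
  assumes "candc S T u a m b w c1 c2 c3 c4" "i \<le> length u" "j \<le> length w"
    "target \<alpha> (take i u) = target (base (sigm T), c4) (take j w)"
  shows False
proof -
  note C = assms(1)[unfolded candc_def]
  define \<gamma> where "\<gamma> = (base (sigm T), c4)"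
  have pw: "pp \<gamma> w" "target \<gamma> w = \<beta>" "low n \<gamma> w" using C by (auto simp: \<gamma>_def)
  show False
  proof (cases "i = 0")
    case True
    then have a: "\<alpha> = target \<gamma> (take j w)" using assms(4) by (simp add: \<gamma>_def)
    show False
    proof (cases "j < length w")
      case True
      have "0 < int c4 + eff (take j w)" using pw(1) True by (simp add: pp_char \<gamma>_def)
      then have "0 < snd (target \<gamma> (take j w))" using pp_prefix[OF pw(1)[unfolded \<gamma>_def], of j] True by (simp add: \<gamma>_def)
      then show False using a \<alpha>0 by simp
    next
      case False
      then have "\<alpha> = \<beta>" using a pw(2) assms(3) by simp
      moreover have "is_arc Tpos Tzero \<alpha> []" using \<alpha>0 by (simp add: is_arc_def)
      moreover have "low n \<alpha> []" using \<alpha>0 n1 by (simp add: low_def)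
      ultimately show False using nolow by fastforce
    qed
  next
    case False
    define ts where "ts = take i u @ drop j w"
    have pu: "is_path Tpos Tzero \<alpha> (take i u)" using C by (metis append_take_drop_id is_path_append)
    have pd: "pp (target \<gamma> (take j w)) (drop j w)" using pw(1) by (metis append_take_drop_id is_path_append)
    have td: "target (target \<gamma> (take j w)) (drop j w) = \<beta>" using pw(2) by (metis append_take_drop_id target_append)
    have arc: "is_arc Tpos Tzero \<alpha> ts" unfolding ts_def
    proof (rule arc_intro[OF pu \<alpha>0])
      show "\<forall>l. 0 < l \<and> l \<le> length (take i u) \<longrightarrow> 0 < snd (target \<alpha> (take l (take i u)))"
        using C assms(2) by (auto simp: posp_def min_def)
      show "pp (target \<alpha> (take i u)) (drop j w)" using pd assms(4) by (simp add: \<gamma>_def)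
      show "snd (target \<alpha> (take i u @ drop j w)) = 0" using td assms(4) \<beta>0 by (simp add: target_append \<gamma>_def)
    qed
    have tgt: "target \<alpha> ts = \<beta>" using td assms(4) by (simp add: target_append \<gamma>_def ts_def)
    have low: "low n \<alpha> ts" unfolding low_def
    proof
      fix x assume "x \<in> set (confs \<alpha> ts)"
      then obtain l where l: "l \<le> length ts" "x = target \<alpha> (take l ts)" unfolding set_confs by blast
      have "l \<le> i + (length w - j)" using l assms(2) by (simp add: ts_def)
      then have "(l \<le> i \<and> x = target \<alpha> (take l u)) \<or> (\<exists>l'. l' \<le> length w \<and> x = target \<gamma> (take l' w))"
        using splice_idx[OF assms(2,3), of \<alpha> \<gamma> l] assms(4) l by (simp add: ts_def \<gamma>_def)
      then show "snd x < 5 * n"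
      proof
        assume "l \<le> i \<and> x = target \<alpha> (take l u)"
        then have "x \<in> set (confs \<alpha> u)" using assms(2) unfolding set_confs by auto
        then show ?thesis using C by (simp add: low_def)
      next
        assume "\<exists>l'. l' \<le> length w \<and> x = target \<gamma> (take l' w)"
        then have "x \<in> set (confs \<gamma> w)" unfolding set_confs by blast
        then show ?thesis using pw(3) by (simp add: low_def)
      qed
    qed
    show False using nolow arc tgt low by blast
  qed
qed

end


definition lexl :: "nat \<times> nat \<times> nat \<Rightarrow> nat \<times> nat \<times> nat \<Rightarrow> bool" where
  "lexl x y \<longleftrightarrow> (x, y) \<in> less_than <*lex*> less_than <*lex*> less_than"

lemma lexl_iff: "lexl (x1,x2,x3) (y1,y2,y3) \<longleftrightarrow> x1 < y1 \<or> (x1 = y1 \<and> (x2 < y2 \<or> (x2 = y2 \<and> x3 < y3)))"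
  by (simp add: lexl_def)

context ocs2 begin

lemma final:
  assumes C: "candc S T u a m b w c1 c2 c3 c4"
    and mn: "\<forall>S' T' u' a' m' b' w' c1' c2' c3' c4'. candc S' T' u' a' m' b' w' c1' c2' c3' c4' \<longrightarrow>
       \<not> lexl (length m', a' + b', length u' + length w') (length m, a + b, length u + length w)"
  shows "\<exists>ts. is_arc Tpos Tzero \<alpha> ts \<and> target \<alpha> ts = \<beta> \<and>
     (\<exists>S T ts1 ts2 ts3 ts4 ts5.
        normal_decomp Q Tpos sigp sigm S T \<alpha> ts ts1 ts2 ts3 ts4 ts5 \<and>
        (\<exists>a b A B :: nat.
           ts2 = concat (replicate a (sigp S)) \<and> eff (sigp S) = int A \<and>
           ts4 = concat (replicate b (sigm T)) \<and> eff (sigm T) = - int B \<and>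
           a * A \<le> 2 * length ts3 + 2 * lcm A B \<and>
           b * B \<le> 2 * length ts3 + 2 * lcm A B \<and>
           (\<forall>u v w. ts3 = u @ v @ w \<longrightarrow> \<not> (is_cycle Tpos v \<and> int (gcd A B) dvd eff v)) \<and>
           snd (target \<alpha> (ts1 @ ts2)) > card Q \<and>
           snd (target \<alpha> (ts1 @ ts2 @ ts3)) > card Q \<and>
           distinct (confs \<alpha> ts1 @ confs (target \<alpha> (ts1 @ ts2 @ ts3 @ ts4)) ts5)))"
proof -
  note CC = C[unfolded candc_def]
  note CA = cand_arc[OF C]
  have SP: "0 < eff (sigp S)" using sp_facts CC by auto
  have SM: "eff (sigm T) < 0" using sm_facts CC by auto
  define A where "A = nat (eff (sigp S))"
  define B where "B = nat (- eff (sigm T))"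
  have eA: "eff (sigp S) = int A" and eB: "eff (sigm T) = - int B" and A0: "0 < A" and B0: "0 < B"
    using SP SM by (auto simp: A_def B_def)
  define l where "l = lcm A B"
  define pA where "pA = l div A"
  define pB where "pB = l div B"
  have pAA: "pA * A = l" unfolding pA_def l_def by simp
  have pBB: "pB * B = l" unfolding pB_def l_def by simp
  have l0: "0 < l" using A0 B0 by (simp add: l_def lcm_pos_nat)
  have lA: "A \<le> l" "B \<le> l" using A0 B0 l0 unfolding l_def by (auto intro: dvd_imp_le)
  define L where "L = length m"
  have pm: "pp (base (sigp S), c2) m" using CC by simp
  have em: "int c3 = int c2 + eff m" using pp_target[OF pm] CC by simp
  have "set m \<subseteq> Tpos" using pm by (simp add: pp_char)
  then have ebd: "- int L \<le> eff m" "eff m \<le> int L" using eff_bound[of m] by (auto simp: L_def)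
  have c2e: "int c2 = int c1 + int a * int A" using CC eA by simp
  have c3e: "int c3 = int c4 + int b * int B" using CC eB by simp
  have n1c: "n < c1" "n < c4" "c1 \<le> 4 * n" "c4 \<le> 4 * n" using CC by auto
  have pA0: "0 < pA" using pAA l0 by (cases pA) auto
  have pB0: "0 < pB" using pBB l0 by (cases pB) auto
  have ipA: "int pA * eff (sigp S) = int l"
  proof -
    have "int (pA * A) = int l" using pAA by simp
    then show ?thesis using eA by simp
  qed
  have ipB: "- int pB * eff (sigm T) = int l"
  proof -
    have "int (pB * B) = int l" using pBB by simp
    then show ?thesis using eB by simp
  qed
  have lAi: "int A \<le> int l" "int B \<le> int l" using lA by simp_all
  have iii: "a * A \<le> 2 * L + 2 * l"
  proof (rule ccontr)
    assume "\<not> a * A \<le> 2 * L + 2 * l"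
    then have bigN: "2 * L + 2 * l < a * A" by simp
    have "int (2 * L + 2 * l) < int (a * A)" using bigN by (simp only: of_nat_less_iff)
    then have big: "2 * int L + 2 * int l < int a * int A" by simp
    show False
    proof (cases "l \<le> b * B")
      case True
      have "pB * B \<le> b * B" using True pBB by simp
      then have pBb: "pB \<le> b" using B0 by simp
      have "pA * A < a * A" using bigN pAA by linarith
      then have pAa: "pA \<le> a" by simp
      have "int (length m) + int l < int c2" using big c2e n1c by (simp add: L_def)
      then obtain c2' c3' where c': "candc S T u (a - pA) m (b - pB) w c1 c2' c3' c4"
        using rep2[OF C ipA ipB pAa pBb] by blast
      have "a - pA + (b - pB) < a + b" using pAa pBb pA0 pB0 by linarith
      then show False using mn[rule_format, OF c'] by (simp add: lexl_iff)
    next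
      case False
      have "int (b * B) < int l" using False by (simp only: of_nat_less_iff not_le)
      then have "int b * int B < int l" by simp
      then have "int c1 + int A < int c4" using big em c2e c3e ebd lAi by linarith
      then have lt: "int c1 + eff (sigp S) < int c4" using eA by simp
      have a1: "1 \<le> a" using bigN by (cases a) auto
      obtain c1' where c': "candc S T (u @ sigp S) (a - 1) m b w c1' c2 c3 c4"
        using rep4[OF C a1 lt] by blast
      have "a - 1 + b < a + b" using a1 by simp
      then show False using mn[rule_format, OF c'] by (simp add: lexl_iff)
    qed
  qed
  have iv: "b * B \<le> 2 * L + 2 * l"
  proof (rule ccontr)
    assume "\<not> b * B \<le> 2 * L + 2 * l"
    then have bigN: "2 * L + 2 * l < b * B" by simp
    have "int (2 * L + 2 * l) < int (b * B)" using bigN by (simp only: of_nat_less_iff)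
    then have big: "2 * int L + 2 * int l < int b * int B" by simp
    show False
    proof (cases "l \<le> a * A")
      case True
      have "pA * A \<le> a * A" using True pAA by simp
      then have pAa: "pA \<le> a" using A0 by simp
      have "pB * B < b * B" using bigN pBB by linarith
      then have pBb: "pB \<le> b" by simp
      have "int (length m) + int l < int c3" using big c3e n1c by (simp add: L_def)
      then obtain c2' c3' where c': "candc S T u (a - pA) m (b - pB) w c1 c2' c3' c4"
        using rep2[OF C ipA ipB pAa pBb] by blast
      have "a - pA + (b - pB) < a + b" using pAa pBb pA0 pB0 by linarith
      then show False using mn[rule_format, OF c'] by (simp add: lexl_iff)
    next
      case False
      have "int (a * A) < int l" using False by (simp only: of_nat_less_iff not_le)
      then have "int a * int A < int l" by simp
      then have "int c4 + int B < int c1" using big em c2e c3e ebd lAi by linarith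
      then have lt: "int c4 - eff (sigm T) < int c1" using eB by simp
      have b1: "1 \<le> b" using bigN by (cases b) auto
      obtain c4' where c': "candc S T u a m (b - 1) (sigm T @ w) c1 c2 c3 c4'"
        using rep4b[OF C b1 lt] by blast
      have "a + (b - 1) < a + b" using b1 by simp
      then show False using mn[rule_format, OF c'] by (simp add: lexl_iff)
    qed
  qed
  have v: "\<forall>u' v w'. m = u' @ v @ w' \<longrightarrow> \<not> (is_cycle Tpos v \<and> int (gcd A B) dvd eff v)"
  proof (intro allI impI notI)
    fix u' v w' assume m: "m = u' @ v @ w'" and cv: "is_cycle Tpos v \<and> int (gcd A B) dvd eff v"
    have "gcd (int A) (int B) dvd eff v" using cv by (simp add: gcd_int_int_eq)
    then obtain x y :: nat where xy: "int x * int A - int y * int B = eff v"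
      using bez[of "int A" "int B" "eff v"] A0 B0 by auto
    then have "int x * eff (sigp S) + int y * eff (sigm T) = eff v" using eA eB by simp
    then obtain c2' c3' where c': "candc S T u (a + x) (u' @ w') (b + y) w c1 c2' c3' c4"
      using rep1[OF C[unfolded m]] cv by blast
    have "length (u' @ w') < length m" using m cv by (simp add: is_cycle_def)
    then show False using mn[rule_format, OF c'] by (simp add: lexl_iff)
  qed
  define \<gamma> where "\<gamma> = (base (sigm T), c4)"
  have vii: "distinct (confs \<alpha> u @ confs \<gamma> w)"
  proof -
    have d1: "distinct (confs \<alpha> u)"
    proof (rule ccontr)
      assume "\<not> distinct (confs \<alpha> u)"
      then obtain i j where ij: "i < Suc (length u)" "j < Suc (length u)" "i \<noteq> j" "confs \<alpha> u ! i = confs \<alpha> u ! j"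
        by (auto simp: distinct_conv_nth)
      have "\<exists>i j. i < j \<and> j \<le> length u \<and> target \<alpha> (take i u) = target \<alpha> (take j u)"
      proof (cases "i < j")
        case True then show ?thesis using ij by (intro exI[of _ i] exI[of _ j]) (simp add: confs_nth)
      next
        case False then show ?thesis using ij by (intro exI[of _ j] exI[of _ i]) (simp add: confs_nth)
      qed
      then obtain i j where ij: "i < j" "j \<le> length u" "target \<alpha> (take i u) = target \<alpha> (take j u)" by blast
      have c': "candc S T (take i u @ drop j u) a m b w c1 c2 c3 c4" using rep3u[OF C ij] .
      have "length (take i u @ drop j u) < length u" using ij by simp
      then show False using mn[rule_format, OF c'] by (simp add: lexl_iff)
    qed
    have d2: "distinct (confs \<gamma> w)"
    proof (rule ccontr)
      assume "\<not> distinct (confs \<gamma> w)"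
      then obtain i j where ij: "i < Suc (length w)" "j < Suc (length w)" "i \<noteq> j" "confs \<gamma> w ! i = confs \<gamma> w ! j"
        by (auto simp: distinct_conv_nth)
      have "\<exists>i j. i < j \<and> j \<le> length w \<and> target \<gamma> (take i w) = target \<gamma> (take j w)"
      proof (cases "i < j")
        case True then show ?thesis using ij by (intro exI[of _ i] exI[of _ j]) (simp add: confs_nth)
      next
        case False then show ?thesis using ij by (intro exI[of _ j] exI[of _ i]) (simp add: confs_nth)
      qed
      then obtain i j where ij: "i < j" "j \<le> length w" "target \<gamma> (take i w) = target \<gamma> (take j w)" by blast
      have c': "candc S T u a m b (take i w @ drop j w) c1 c2 c3 c4" using rep3w[OF C ij[unfolded \<gamma>_def]] .
      have "length (take i w @ drop j w) < length w" using ij by simp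
      then show False using mn[rule_format, OF c'] by (simp add: lexl_iff)
    qed
    have d3: "set (confs \<alpha> u) \<inter> set (confs \<gamma> w) = {}"
    proof (rule ccontr)
      assume "set (confs \<alpha> u) \<inter> set (confs \<gamma> w) \<noteq> {}"
      then obtain x where "x \<in> set (confs \<alpha> u)" "x \<in> set (confs \<gamma> w)" by blast
      then obtain i j where "i \<le> length u" "x = target \<alpha> (take i u)" "j \<le> length w" "x = target \<gamma> (take j w)"
        unfolding set_confs by blast
      then show False using cross[OF C, of i j] by (simp add: \<gamma>_def)
    qed
    show ?thesis using d1 d2 d3 by simp
  qed
  have vi: "snd (target \<alpha> (u @ pw (sigp S) a)) > n" "snd (target \<alpha> (u @ pw (sigp S) a @ m)) > n"
  proof -
    have "0 \<le> int a * int A" "0 \<le> int b * int B" by simp_all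
    then have "int n < int c2" "int n < int c3" using c2e c3e n1c by linarith+
    then show "snd (target \<alpha> (u @ pw (sigp S) a)) > n" "snd (target \<alpha> (u @ pw (sigp S) a @ m)) > n"
      using CA by auto
  qed
  have nd: "normal_decomp Q Tpos sigp sigm S T \<alpha> (u @ pw (sigp S) a @ m @ pw (sigm T) b @ w)
      u (pw (sigp S) a) m (pw (sigm T) b) w"
    unfolding normal_decomp_def using CC CA by auto
  show ?thesis
    apply (rule exI[of _ "u @ pw (sigp S) a @ m @ pw (sigm T) b @ w"])
    apply (intro conjI)
      apply (simp add: CA)
     apply (simp add: CA)
    apply (rule exI[of _ S], rule exI[of _ T], rule exI[of _ u], rule exI[of _ "pw (sigp S) a"],
        rule exI[of _ m], rule exI[of _ "pw (sigm T) b"], rule exI[of _ w])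
    apply (intro conjI)
     apply (rule nd)
    apply (rule exI[of _ a], rule exI[of _ b], rule exI[of _ A], rule exI[of _ B])
    using eA eB iii iv v vi vii CA by (simp add: L_def l_def \<gamma>_def)
qed

end


lemma length_pw[simp]: "length (pw cy k) = k * length cy"
  by (induction k) auto

context ocs2 begin

lemma arc_lev:
  assumes "is_arc Tpos Tzero \<alpha> \<rho>" "l \<le> length \<rho>"
  shows "target \<alpha> (take l \<rho>) = (endst (fst \<alpha>) (take l \<rho>), nat (eff (take l \<rho>))) \<and> 0 \<le> eff (take l \<rho>)
     \<and> endst (fst \<alpha>) (take l \<rho>) \<in> Q"
proof -
  have p: "is_path Tpos Tzero (fst \<alpha>, 0) \<rho>" using assms(1) \<alpha>0 by (simp add: is_arc_def) (metis prod.collapse)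
  have pt: "is_path Tpos Tzero (fst \<alpha>, 0) (take l \<rho>)" using p by (metis append_take_drop_id is_path_append)
  have "endst (fst \<alpha>) (take l \<rho>) \<in> Q"
    using endst_Q[OF path_chain[OF pt] \<alpha>Q path_set[OF pt]] .
  moreover have "\<alpha> = (fst \<alpha>, 0)" using \<alpha>0 by (metis prod.collapse)
  ultimately show ?thesis using path_target[OF pt] by simp
qed

lemma arc_step:
  assumes "is_arc Tpos Tzero \<alpha> \<rho>" "l < length \<rho>"
  shows "\<bar>eff (take (Suc l) \<rho>) - eff (take l \<rho>)\<bar> \<le> 1"
  using path_step[of \<alpha> \<rho> l] assms by (simp add: is_arc_def)

lemma arc_posl:
  assumes "is_arc Tpos Tzero \<alpha> \<rho>" "0 < l" "l < length \<rho>"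
  shows "0 < eff (take l \<rho>)"
proof -
  have "0 < snd (confs \<alpha> \<rho> ! l)" using assms by (simp add: is_arc_def)
  then show ?thesis using arc_lev[OF assms(1), of l] assms by (simp add: confs_nth)
qed

definition sccof :: "'q \<Rightarrow> 'q set" where
  "sccof s = {q \<in> Q. (s, q) \<in> (edges Tpos)\<^sup>* \<and> (q, s) \<in> (edges Tpos)\<^sup>*}"

lemma cyc_scc:
  assumes "chain s C" "set C \<subseteq> Tpos" "C \<noteq> []" "endst s C = s" "s \<in> Q"
  shows "is_cycle Tpos C \<and> cycle_in C (sccof s) \<and> is_scc Q Tpos (sccof s)"
proof -
  have cyc: "is_cycle Tpos C" unfolding is_cycle_def
    using assms chain_consistent chain_last chain_hd by metis
  have "set (map src C) \<subseteq> sccof s"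
  proof
    fix x assume "x \<in> set (map src C)"
    then obtain p where p: "p < length C" "x = src (C ! p)" by (auto simp: in_set_conv_nth)
    have x: "x = endst s (take p C)" using chain_take_src[OF assms(1) p(1)] p by simp
    have c1: "chain s (take p C)" using assms(1) by (metis append_take_drop_id chain_append)
    have c2: "chain x (drop p C)" using assms(1) x by (metis append_take_drop_id chain_append)
    have s1: "set (take p C) \<subseteq> Tpos" "set (drop p C) \<subseteq> Tpos" using assms(2)
      by (meson order.trans set_take_subset set_drop_subset)+
    have "(s, x) \<in> (edges Tpos)\<^sup>*" using chain_edges[OF c1 s1(1)] x by simp
    moreover have "endst x (drop p C) = s" using assms(4) x by (metis append_take_drop_id endst_append)
    then have "(x, s) \<in> (edges Tpos)\<^sup>*" using chain_edges[OF c2 s1(2)] by simp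
    moreover have "x \<in> Q" using endst_Q[OF c1 assms(5)] s1 x by auto
    ultimately show "x \<in> sccof s" by (simp add: sccof_def)
  qed
  then show ?thesis using cyc assms(5) by (auto simp: cycle_in_def is_scc_def sccof_def)
qed

lemma indices:
  assumes arc: "is_arc Tpos Tzero \<alpha> \<rho>" and tb: "target \<alpha> \<rho> = \<beta>" and nl: "\<not> low n \<alpha> \<rho>"
  defines "f \<equiv> \<lambda>l. eff (take l \<rho>)" and "st \<equiv> \<lambda>l. endst (fst \<alpha>) (take l \<rho>)"
  shows "\<exists>i j J2 I2. 0 < i \<and> i < j \<and> j \<le> J2 \<and> J2 < I2 \<and> I2 \<le> length \<rho> \<and>
     st i = st j \<and> st J2 = st I2 \<and> f i < f j \<and> f I2 < f J2 \<and>
     2 * int n \<le> f i \<and> f i \<le> 3 * int n \<and> 2 * int n \<le> f I2 \<and> f I2 \<le> 3 * int n \<and>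
     (\<forall>l\<le>i. f l < 4 * int n) \<and> (\<forall>l. I2 \<le> l \<and> l \<le> length \<rho> \<longrightarrow> f l < 4 * int n)"
proof -
  define N where "N = length \<rho>"
  have lev: "\<And>l. l \<le> N \<Longrightarrow> target \<alpha> (take l \<rho>) = (st l, nat (f l)) \<and> 0 \<le> f l \<and> st l \<in> Q"
    using arc_lev[OF arc] by (simp add: f_def st_def N_def)
  have step: "\<And>l. l < N \<Longrightarrow> \<bar>f (Suc l) - f l\<bar> \<le> 1" using arc_step[OF arc] by (simp add: f_def N_def)
  have f0: "f 0 = 0" by (simp add: f_def)
  have fN: "f N = 0"
  proof -
    have "target \<alpha> (take N \<rho>) = \<beta>" using tb by (simp add: N_def)
    then show ?thesis using lev[of N] \<beta>0 by auto
  qed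
  obtain x where x: "x \<in> set (confs \<alpha> \<rho>)" "\<not> snd x < 5 * n" using nl by (auto simp: low_def)
  then obtain l0 where l0: "l0 \<le> N" "x = target \<alpha> (take l0 \<rho>)" unfolding set_confs N_def by blast
  have fl0: "5 * int n \<le> f l0" using x(2) l0 lev[OF l0(1)] by auto
  have n1': "1 \<le> int n" using n1 by simp
  define H where "H = (LEAST l. 4 * int n \<le> f l)"
  have H1: "4 * int n \<le> f H" unfolding H_def by (rule LeastI[of _ l0]) (use fl0 n1' in linarith)
  have H2: "H \<le> l0" unfolding H_def by (rule Least_le) (use fl0 n1' in linarith)
  have H3: "\<And>l. l < H \<Longrightarrow> f l < 4 * int n" unfolding H_def using not_less_Least by force
  have H0: "0 < H" using H1 f0 n1' by (cases H) auto
  have fH: "f H = 4 * int n"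
  proof -
    have "f (H - 1) < 4 * int n" using H3 H0 by simp
    moreover have "H - 1 < N" using H0 H2 l0 by simp
    then have "\<bar>f (Suc (H - 1)) - f (H - 1)\<bar> \<le> 1" by (rule step)
    moreover have "Suc (H - 1) = H" using H0 by simp
    ultimately show ?thesis using H1 by simp
  qed
  define H' where "H' = (GREATEST l. l \<le> N \<and> 4 * int n \<le> f l)"
  have G1: "H' \<le> N \<and> 4 * int n \<le> f H'" unfolding H'_def
    by (rule GreatestI_nat[of _ l0 N]) (use fl0 n1' l0 in auto)
  have G2: "H \<le> H'" unfolding H'_def
    by (rule Greatest_le_nat[of _ H N]) (use H1 H2 l0 in auto)
  have G3: "\<And>l. H' < l \<Longrightarrow> l \<le> N \<Longrightarrow> f l < 4 * int n"
  proof -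
    fix l assume "H' < l" "l \<le> N"
    moreover have "\<And>l. l \<le> N \<and> 4 * int n \<le> f l \<Longrightarrow> l \<le> H'" unfolding H'_def
      by (rule Greatest_le_nat[of _ _ N]) auto
    ultimately show "f l < 4 * int n" by force
  qed
  have GN: "H' < N" using G1 fN n1' by (cases "H' = N") auto
  have fH': "f H' = 4 * int n"
  proof -
    have "f (Suc H') < 4 * int n" using G3 GN by simp
    moreover have "\<bar>f (Suc H') - f H'\<bar> \<le> 1" using step GN by simp
    ultimately show ?thesis using G1 by simp
  qed
  have "\<exists>i j. i < j \<and> j \<le> H \<and> st i = st j \<and> f i < f j \<and> 2 * int n \<le> f i \<and> f i \<le> 3 * int n \<and>
     (\<forall>l. i \<le> l \<and> l \<le> j \<longrightarrow> f i \<le> f l)"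
    by (rule climb[where Q=Q]) (use step f0 fH H3 lev finQ n1 H2 l0 in auto)
  then obtain i j where ij: "i < j" "j \<le> H" "st i = st j" "f i < f j" "2 * int n \<le> f i" "f i \<le> 3 * int n"
    by blast
  define g where "g l = f (N - l)" for l
  define st' where "st' l = st (N - l)" for l
  have "\<exists>i j. i < j \<and> j \<le> N - H' \<and> st' i = st' j \<and> g i < g j \<and> 2 * int n \<le> g i \<and> g i \<le> 3 * int n \<and>
     (\<forall>l. i \<le> l \<and> l \<le> j \<longrightarrow> g i \<le> g l)"
  proof (rule climb[where Q=Q])
    show "\<forall>i<N - H'. \<bar>g (Suc i) - g i\<bar> \<le> 1"
    proof (intro allI impI)
      fix i assume i: "i < N - H'"
      have "\<bar>f (Suc (N - Suc i)) - f (N - Suc i)\<bar> \<le> 1" using step i by simp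
      moreover have "Suc (N - Suc i) = N - i" using i by simp
      ultimately show "\<bar>g (Suc i) - g i\<bar> \<le> 1" by (simp add: g_def abs_minus_commute)
    qed
    show "g 0 \<le> 2 * int n" using fN by (simp add: g_def)
    show "g (N - H') = 4 * int n" using fH' GN by (simp add: g_def)
    show "\<forall>i<N - H'. g i < 4 * int n" using G3 by (simp add: g_def)
    show "\<forall>i\<le>N - H'. st' i \<in> Q" using lev by (simp add: st'_def)
  qed (use finQ n1 in auto)
  then obtain i' j' where ij': "i' < j'" "j' \<le> N - H'" "st' i' = st' j'" "g i' < g j'" "2 * int n \<le> g i'" "g i' \<le> 3 * int n"
    by blast
  define I2 where "I2 = N - i'"
  define J2 where "J2 = N - j'"
  have i0: "0 < i" using ij(5) f0 n1' by (cases i) auto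
  have F1: "j \<le> J2" using ij(2) G2 conjunct1[OF G1] ij'(2) unfolding J2_def by linarith
  have F2: "J2 < I2" using ij'(1,2) GN by (simp add: J2_def I2_def)
  have F3: "I2 \<le> length \<rho>" by (simp add: I2_def N_def)
  have F4: "st J2 = st I2" using ij'(3) by (simp add: st'_def J2_def I2_def)
  have F5: "f I2 < f J2" "2 * int n \<le> f I2" "f I2 \<le> 3 * int n" using ij'(4-6) by (simp_all add: g_def I2_def J2_def)
  have F6: "\<forall>l\<le>i. f l < 4 * int n" using H3 ij(1,2) by simp
  have F7: "\<forall>l. I2 \<le> l \<and> l \<le> length \<rho> \<longrightarrow> f l < 4 * int n"
  proof (intro allI impI)
    fix l assume l: "I2 \<le> l \<and> l \<le> length \<rho>"
    then have "H' < l" using ij'(1,2) GN unfolding I2_def N_def by linarith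
    then show "f l < 4 * int n" using G3 l by (simp add: N_def)
  qed
  show ?thesis
    apply (rule exI[of _ i], rule exI[of _ j], rule exI[of _ J2], rule exI[of _ I2])
    using i0 ij F1 F2 F3 F4 F5 F6 F7 by blast
qed

end


context ocs2 begin

lemma init_cand:
  assumes arc: "is_arc Tpos Tzero \<alpha> \<rho>" and tb: "target \<alpha> \<rho> = \<beta>"
  shows "\<exists>S T u a m b w c1 c2 c3 c4. candc S T u a m b w c1 c2 c3 c4"
proof -
  have nl: "\<not> low n \<alpha> \<rho>" using nolow arc tb by blast
  define N where "N = length \<rho>"
  define f where "f = (\<lambda>l. eff (take l \<rho>))"
  define st where "st = (\<lambda>l. endst (fst \<alpha>) (take l \<rho>))"
  obtain i j J2 I2 where ix: "0 < i" "i < j" "j \<le> J2" "J2 < I2" "I2 \<le> N"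
     "st i = st j" "st J2 = st I2" "f i < f j" "f I2 < f J2"
     "2 * int n \<le> f i" "f i \<le> 3 * int n" "2 * int n \<le> f I2" "f I2 \<le> 3 * int n"
     "\<forall>l\<le>i. f l < 4 * int n" "\<forall>l. I2 \<le> l \<and> l \<le> N \<longrightarrow> f l < 4 * int n"
    using indices[OF arc tb nl] unfolding f_def st_def N_def by blast
  have lev: "\<And>l. l \<le> N \<Longrightarrow> target \<alpha> (take l \<rho>) = (st l, nat (f l)) \<and> 0 \<le> f l \<and> st l \<in> Q"
    using arc_lev[OF arc] by (simp add: f_def st_def N_def)
  have n1': "1 \<le> int n" using n1 by simp
  define s where "s = st i"
  define t where "t = st I2"
  define kI where "kI = f i"
  define k2I where "k2I = f I2"
  have tI: "target \<alpha> (take i \<rho>) = (s, nat kI)" using lev[of i] ix by (simp add: s_def kI_def)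
  have tI2: "target \<alpha> (take I2 \<rho>) = (t, nat k2I)" using lev[of I2] ix by (simp add: t_def k2I_def)
  have tJ2: "target \<alpha> (take J2 \<rho>) = (t, nat (f J2))" using lev[of J2] ix by (simp add: t_def)
  have sQ: "s \<in> Q" "t \<in> Q" using lev ix by (auto simp: s_def t_def)
  have ppi: "pp (s, nat kI) (drop i \<rho>)" using arc_pp[OF arc, of i] ix tI by (simp add: N_def)
  have ppJ: "pp (t, nat (f J2)) (drop J2 \<rho>)" using arc_pp[OF arc, of J2] ix tJ2 by (simp add: N_def)
  have ppI: "pp (t, nat k2I) (drop I2 \<rho>)" using arc_pp[OF arc, of I2] ix tI2 by (simp add: N_def)
  have seg: "\<And>a b. a \<le> b \<Longrightarrow> b \<le> N \<Longrightarrow> take b \<rho> = take a \<rho> @ take (b - a) (drop a \<rho>)"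
    by (metis le_add_diff_inverse take_add)
  have segst: "\<And>a b. a \<le> b \<Longrightarrow> b \<le> N \<Longrightarrow> st b = endst (st a) (take (b - a) (drop a \<rho>))
      \<and> f b = f a + eff (take (b - a) (drop a \<rho>))"
    using seg by (simp add: st_def f_def)
  define C where "C = take (j - i) (drop i \<rho>)"
  have pC: "pp (s, nat kI) C" using pp_prefix[OF ppi, of "j - i"] ix by (simp add: C_def N_def)
  have chC: "chain s C" "set C \<subseteq> Tpos" using pC by (auto simp: pp_char)
  have eC: "endst s C = s" "eff C = f j - f i" using segst[of i j] ix by (auto simp: C_def s_def)
  have neC: "C \<noteq> []" using ix by (simp add: C_def N_def)
  define S where "S = sccof s"
  have cS: "is_cycle Tpos C \<and> cycle_in C S \<and> is_scc Q Tpos S"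
    using cyc_scc[OF chC neC eC(1) sQ(1)] by (simp add: S_def)
  have peS: "pos_enabled Tpos S" unfolding pos_enabled_def using cS eC ix by auto
  define D where "D = take (I2 - J2) (drop J2 \<rho>)"
  have pD: "pp (t, nat (f J2)) D" using pp_prefix[OF ppJ, of "I2 - J2"] ix by (simp add: D_def N_def)
  have chD: "chain t D" "set D \<subseteq> Tpos" using pD by (auto simp: pp_char)
  have eD: "endst t D = t" "eff D = f I2 - f J2" using segst[of J2 I2] ix by (auto simp: D_def t_def)
  have neD: "D \<noteq> []" using ix by (simp add: D_def N_def)
  define T where "T = sccof t"
  have cT: "is_cycle Tpos D \<and> cycle_in D T \<and> is_scc Q Tpos T"
    using cyc_scc[OF chD neD eD(1) sQ(2)] by (simp add: T_def)
  have neT: "neg_enabled Tpos T" unfolding neg_enabled_def using cT eD ix by auto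
  have SP: "chain (base (sigp S)) (sigp S)" "endst (base (sigp S)) (sigp S) = base (sigp S)"
    "set (sigp S) \<subseteq> Tpos" "length (sigp S) \<le> n" "0 < eff (sigp S)" using sp_facts cS peS by auto
  have SM: "chain (base (sigm T)) (sigm T)" "endst (base (sigm T)) (sigm T) = base (sigm T)"
    "set (sigm T) \<subseteq> Tpos" "length (sigm T) \<le> n" "eff (sigm T) < 0" using sm_facts cT neT by auto
  define bS where "bS = base (sigp S)"
  define bT where "bT = base (sigm T)"
  have bSS: "bS \<in> S"
  proof -
    have "cycle_in (sigp S) S \<and> is_cycle Tpos (sigp S)" using gc cS peS unfolding good_choice_def simple_cycle_def by blast
    then show ?thesis unfolding bS_def base_def cycle_in_def is_cycle_def by (cases "sigp S") auto
  qed
  have bTT: "bT \<in> T"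
  proof -
    have "cycle_in (sigm T) T \<and> is_cycle Tpos (sigm T)" using gc cT neT unfolding good_choice_def simple_cycle_def by blast
    then show ?thesis unfolding bT_def base_def cycle_in_def is_cycle_def by (cases "sigm T") auto
  qed
  have rS: "(s, bS) \<in> (edges Tpos)\<^sup>*" "(bS, s) \<in> (edges Tpos)\<^sup>*" "bS \<in> Q" using bSS by (auto simp: S_def sccof_def)
  have rT: "(t, bT) \<in> (edges Tpos)\<^sup>*" "(bT, t) \<in> (edges Tpos)\<^sup>*" "bT \<in> Q" using bTT by (auto simp: T_def sccof_def)
  obtain P where P: "chain s P" "set P \<subseteq> Tpos" "endst s P = bS" "length P < n" using short_path[OF rS(1) sQ(1)] by blast
  obtain P' where P': "chain bS P'" "set P' \<subseteq> Tpos" "endst bS P' = s" "length P' < n" using short_path[OF rS(2) rS(3)] by blast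
  obtain Q1 where Q1: "chain t Q1" "set Q1 \<subseteq> Tpos" "endst t Q1 = bT" "length Q1 < n" using short_path[OF rT(1) sQ(2)] by blast
  obtain Q1' where Q1': "chain bT Q1'" "set Q1' \<subseteq> Tpos" "endst bT Q1' = t" "length Q1' < n" using short_path[OF rT(2) rT(3)] by blast
  have eP: "\<bar>eff P\<bar> < int n" using eff_bound[OF P(2)] P(4) by linarith
  have eP': "\<bar>eff P'\<bar> < int n" using eff_bound[OF P'(2)] P'(4) by linarith
  have eQ: "\<bar>eff Q1\<bar> < int n" using eff_bound[OF Q1(2)] Q1(4) by linarith
  have eQ': "\<bar>eff Q1'\<bar> < int n" using eff_bound[OF Q1'(2)] Q1'(4) by linarith
  define A where "A = eff (sigp S)"
  define B where "B = - eff (sigm T)"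
  have A0: "0 < A" and B0: "0 < B" using SP SM by (auto simp: A_def B_def)
  define E1 where "E1 = eff P + eff P'"
  define E2 where "E2 = eff Q1 + eff Q1'"
  define Sg where "Sg = E1 + E2"
  define M where "M = nat (A * B)"
  have AB: "0 < A * B" using A0 B0 by simp
  have M: "int M = A * B" "1 \<le> M" using AB by (auto simp: M_def)
  define xI where "xI = 4 * int n * B + (if Sg < 0 then B * (- Sg) else 0)"
  define yI where "yI = 4 * int n * A + (if Sg < 0 then 0 else A * Sg)"
  have key: "xI * A - yI * B + int M * Sg = 0"
    unfolding xI_def yI_def M(1) by (cases "Sg < 0") (simp_all add: algebra_simps)
  have xI0: "0 \<le> xI" "0 \<le> yI"
  proof -
    have "0 \<le> (if Sg < 0 then B * (- Sg) else 0)" "0 \<le> (if Sg < 0 then 0 else A * Sg)"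
      using A0 B0 by (auto simp: mult_pos_neg less_imp_le)
    moreover have "0 \<le> 4 * int n * B" "0 \<le> 4 * int n * A" using A0 B0 by auto
    ultimately show "0 \<le> xI" "0 \<le> yI" unfolding xI_def yI_def by linarith+
  qed
  have b1: "4 * int n * int M \<le> xI * A"
  proof -
    have "0 \<le> (if Sg < 0 then B * (- Sg) else 0)"
      using A0 B0 by (auto simp: mult_pos_neg less_imp_le)
    then have "4 * int n * B \<le> xI" unfolding xI_def by linarith
    then have "4 * int n * B * A \<le> xI * A" using A0 by (simp add: mult_right_mono)
    then show ?thesis using M by (simp add: algebra_simps)
  qed
  have b2: "- (2 * int n) * int M \<le> int M * E1"
  proof -
    have h: "- (2 * int n) \<le> E1" using eP eP' unfolding E1_def by linarith
    have "- (2 * int n) * int M \<le> E1 * int M" using mult_right_mono[OF h, of "int M"] by simp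
    then show ?thesis by (simp add: mult.commute)
  qed
  define x where "x = nat xI"
  define y where "y = nat yI"
  have xy: "int x = xI" "int y = yI" using xI0 by (auto simp: x_def y_def)
  define c1 where "c1 = nat (kI + eff P)"
  define c4 where "c4 = nat (k2I - eff Q1')"
  have kb: "2 * int n \<le> kI" "kI \<le> 3 * int n" "2 * int n \<le> k2I" "k2I \<le> 3 * int n" using ix by (auto simp: kI_def k2I_def)
  have c1: "int c1 = kI + eff P" "n < c1" "c1 \<le> 4 * n" using kb eP by (auto simp: c1_def)
  have c4: "int c4 = k2I - eff Q1'" "n < c4" "c4 \<le> 4 * n" using kb eQ' by (auto simp: c4_def)
  define c2 where "c2 = nat (int c1 + xI * A)"
  define c3 where "c3 = nat (int c4 + yI * B)"
  have c2: "int c2 = int c1 + xI * A" using xI0 A0 by (simp add: c2_def)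
  have c3: "int c3 = int c4 + yI * B" using xI0 B0 by (simp add: c3_def)
  define u where "u = take i \<rho> @ P"
  have pP: "pp (s, nat kI) P" by (rule pp_bounded[OF P(1,2)]) (use P(4) kb in linarith)
  have tP: "target (s, nat kI) P = (bS, c1)" using pp_target[OF pp_prefix[OF pP order_refl, THEN conjunct1]] P(3) kb c1
    by (simp add: c1_def)
  have pu: "is_path Tpos Tzero \<alpha> u"
  proof -
    have "is_path Tpos Tzero \<alpha> \<rho>" using arc by (simp add: is_arc_def)
    then have "is_path Tpos Tzero \<alpha> (take i \<rho>)" by (metis append_take_drop_id is_path_append)
    then show ?thesis using tI pp_mono[OF pP] by (simp add: u_def is_path_append)
  qed
  have tu: "target \<alpha> u = (bS, c1)" using tI tP by (simp add: u_def target_append)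
  have li: "length (take i \<rho>) = i" using ix by (simp add: N_def)
  have posu: "posp \<alpha> u" unfolding posp_def
  proof (intro allI impI)
    fix l assume l: "0 < l \<and> l \<le> length u"
    show "0 < snd (target \<alpha> (take l u))"
    proof (cases "l \<le> i")
      case True
      have "take l u = take l \<rho>" using True li by (simp add: u_def)
      moreover have "0 < f l" using arc_posl[OF arc, of l] l True ix by (simp add: f_def N_def)
      ultimately show ?thesis using lev[of l] True ix by simp
    next
      case False
      have "take l u = take i \<rho> @ take (l - i) P" using False li by (simp add: u_def)
      then have "target \<alpha> (take l u) = target (s, nat kI) (take (l - i) P)" using tI by (simp add: target_append)
      moreover have "0 < snd (target (s, nat kI) (take (l - i) P))"
        by (rule pp_pos_prefix[OF pP]) (use tP c1 False l li in \<open>auto simp: u_def\<close>)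
      ultimately show ?thesis by simp
    qed
  qed
  have lowu: "low n \<alpha> u"
  proof -
    have "low n \<alpha> (take i \<rho>)" unfolding low_def
    proof
      fix z assume "z \<in> set (confs \<alpha> (take i \<rho>))"
      then obtain l where l: "l \<le> length (take i \<rho>)" "z = target \<alpha> (take l (take i \<rho>))" unfolding set_confs by blast
      then have "l \<le> i" "z = target \<alpha> (take l \<rho>)" using li by (auto simp: min_def)
      then show "snd z < 5 * n" using lev[of l] ix by auto
    qed
    moreover have "low n (s, nat kI) P" by (rule low_pp[OF pP]) (use kb P(4) in linarith)
    ultimately show ?thesis using tI by (simp add: u_def low_append)
  qed
  define w where "w = Q1' @ drop I2 \<rho>"
  have pQ1': "pp (bT, c4) Q1'" by (rule pp_bounded[OF Q1'(1,2)]) (use Q1'(4) c4 in linarith)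
  have tQ1': "target (bT, c4) Q1' = (t, nat k2I)" using pp_target[OF pQ1'] Q1'(3) c4 by simp
  have pw: "pp (bT, c4) w" using pQ1' tQ1' ppI by (simp add: w_def is_path_append)
  have tw: "target (bT, c4) w = \<beta>"
  proof -
    have "target (t, nat k2I) (drop I2 \<rho>) = \<beta>" using tI2 tb by (metis append_take_drop_id target_append)
    then show ?thesis using tQ1' by (simp add: w_def target_append)
  qed
  have loww: "low n (bT, c4) w"
  proof -
    have "low n (t, nat k2I) (drop I2 \<rho>)" unfolding low_def
    proof
      fix z assume "z \<in> set (confs (t, nat k2I) (drop I2 \<rho>))"
      then obtain l where l: "l \<le> length (drop I2 \<rho>)" "z = target (t, nat k2I) (take l (drop I2 \<rho>))" unfolding set_confs by blast
      have "z = target \<alpha> (take I2 \<rho> @ take l (drop I2 \<rho>))" using l tI2 by (simp add: target_append)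
      also have "take I2 \<rho> @ take l (drop I2 \<rho>) = take (I2 + l) \<rho>" by (simp add: take_add)
      finally have "z = target \<alpha> (take (I2 + l) \<rho>)" .
      moreover have "I2 + l \<le> N" using l ix(5) by (simp add: N_def)
      ultimately have "snd z = nat (f (I2 + l))" "f (I2 + l) < 4 * int n" "0 \<le> f (I2 + l)"
        using lev[of "I2 + l"] ix(15) by auto
      then show "snd z < 5 * n" by (simp add: nat_less_iff)
    qed
    moreover have "low n (bT, c4) Q1'" by (rule low_pp[OF pQ1']) (use c4 Q1'(4) in linarith)
    ultimately show ?thesis using tQ1' by (simp add: w_def low_append)
  qed
  define W1 where "W1 = pw (P @ P') (M - 1)"
  define mid where "mid = take (I2 - i) (drop i \<rho>)"
  define W2 where "W2 = pw (Q1 @ Q1') (M - 1)"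
  define m where "m = P' @ W1 @ mid @ W2 @ Q1"
  have lW: "int (length W1) \<le> 2 * int n * int M" "int (length W2) \<le> 2 * int n * int M"
  proof -
    have "length W1 \<le> M * (2 * n)" unfolding W1_def length_pw using P(4) P'(4)
      by (intro mult_le_mono) auto
    then have "int (length W1) \<le> int (M * (2 * n))" by (simp only: of_nat_le_iff)
    then show "int (length W1) \<le> 2 * int n * int M" by (simp add: algebra_simps)
    have "length W2 \<le> M * (2 * n)" unfolding W2_def length_pw using Q1(4) Q1'(4)
      by (intro mult_le_mono) auto
    then have "int (length W2) \<le> int (M * (2 * n))" by (simp only: of_nat_le_iff)
    then show "int (length W2) \<le> 2 * int n * int M" by (simp add: algebra_simps)
  qed
  have xA0: "0 \<le> xI * A" "0 \<le> yI * B" using xI0 A0 B0 by simp_all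
  have pP': "pp (bS, c2) P'" by (rule pp_bounded[OF P'(1,2)]) (use P'(4) c1 c2 xA0 in linarith)
  have Pe: "- int n < eff P" "eff P < int n" "- int n < eff P'" "eff P' < int n"
    "- int n < eff Q1" "eff Q1 < int n" "- int n < eff Q1'" "eff Q1' < int n" using eP eP' eQ eQ' by linarith+
  define d1 where "d1 = nat (int c2 + eff P')"
  have "0 \<le> int c2 + eff P'" using c1 c2 xA0 Pe by linarith
  then have d1: "int d1 = int c2 + eff P'" unfolding d1_def by simp
  have tP': "target (bS, c2) P' = (s, d1)" using pp_target[OF pP'] P'(3) by (simp add: d1_def)
  have chPP: "chain s (P @ P')" "endst s (P @ P') = s" "set (P @ P') \<subseteq> Tpos"
    by (simp_all add: P(1,2,3) P'(1,2,3))
  have chW1: "chain s W1" "endst s W1 = s" "set W1 \<subseteq> Tpos"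
    unfolding W1_def
      apply (rule chain_pow[OF chPP(1,2)])
     apply (rule endst_pow[OF chPP(2)])
    using order.trans[OF set_pow chPP(3)] .
  have nM: "0 \<le> int n * int M" by simp
  have pW1: "pp (s, d1) W1"
    by (rule pp_bounded[OF chW1(1,3)]) (use lW(1) d1 c1 c2 b1 Pe kb nM in linarith)
  have hM1: "int (M - 1) * E1 = int M * E1 - E1" using M(2) by (simp add: of_nat_diff algebra_simps)
  have hM2: "int (M - 1) * E2 = int M * E2 - E2" using M(2) by (simp add: of_nat_diff algebra_simps)
  define d2 where "d2 = nat (int d1 + int (M - 1) * E1)"
  have d2: "int d2 = int d1 + int (M - 1) * E1" and tW1: "target (s, d1) W1 = (s, d2)"
    using pp_target[OF pW1] chW1(2) by (auto simp: d2_def W1_def E1_def)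
  have pmid0: "pp (s, nat kI) mid" using pp_prefix[OF ppi, of "I2 - i"] ix by (simp add: mid_def N_def)
  have "kI \<le> int d2" using d2 d1 hM1 c1 c2 b1 b2 kb nM unfolding E1_def by linarith
  then have "nat kI \<le> d2" by (simp add: nat_le_iff)
  then have pmid: "pp (s, d2) mid" using pp_shift[OF pmid0] by simp
  have emid: "endst s mid = t" "eff mid = k2I - kI" using segst[of i I2] ix
    by (auto simp: mid_def s_def t_def kI_def k2I_def)
  define d3 where "d3 = nat (int d2 + eff mid)"
  have d3: "int d3 = int d2 + eff mid" and tmid: "target (s, d2) mid = (t, d3)"
    using pp_target[OF pmid] emid(1) by (auto simp: d3_def)
  have chQQ: "chain t (Q1 @ Q1')" "endst t (Q1 @ Q1') = t" "set (Q1 @ Q1') \<subseteq> Tpos"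
    by (simp_all add: Q1(1,2,3) Q1'(1,2,3))
  have chW2: "chain t W2" "endst t W2 = t" "set W2 \<subseteq> Tpos"
    unfolding W2_def
      apply (rule chain_pow[OF chQQ(1,2)])
     apply (rule endst_pow[OF chQQ(2)])
    using order.trans[OF set_pow chQQ(3)] .
  have pW2: "pp (t, d3) W2"
    by (rule pp_bounded[OF chW2(1,3)]) (use lW(2) d3 emid d2 d1 hM1 c1 c2 b1 b2 kb nM in \<open>unfold E1_def; linarith\<close>)
  define d4 where "d4 = nat (int d3 + int (M - 1) * E2)"
  have d4: "int d4 = int d3 + int (M - 1) * E2" and tW2: "target (t, d3) W2 = (t, d4)"
    using pp_target[OF pW2] chW2(2) by (auto simp: d4_def W2_def E2_def)
  have MS: "int M * Sg = int M * E1 + int M * E2" by (simp add: Sg_def algebra_simps)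
  have d4e: "int d4 + eff Q1 = int c3"
    using d4 hM2 d3 emid d2 hM1 d1 c2 c1 c4 c3 key MS unfolding E1_def E2_def by linarith
  have pQ1: "pp (t, d4) Q1"
    by (rule pp_endbounded[OF Q1(1,2)]) (use d4e c3 c4 xA0 Q1(4) in linarith)
  have tQ1: "target (t, d4) Q1 = (bT, c3)" using pp_target[OF pQ1] Q1(3) d4e by simp
  have pm: "pp (bS, c2) m" using pP' tP' pW1 tW1 pmid tmid pW2 tW2 pQ1 by (simp add: m_def is_path_append)
  have tm: "target (bS, c2) m = (bT, c3)" using tP' tW1 tmid tW2 tQ1 by (simp add: m_def target_append)
  have "candc S T u x m y w c1 c2 c3 c4"
    unfolding candc_def
    using cS peS cT neT pu posu lowu tu c1 c2 xy pm tm c3 c4 pw tw loww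
    by (simp add: bS_def bT_def A_def B_def)
  then show ?thesis by blast
qed
end


lemma ex_weaken: "\<exists>x. P x \<and> Q x \<and> R x \<Longrightarrow> \<exists>x. P x \<and> Q x \<and> (L x \<or> R x)" by blast

theorem lemma2:
  fixes Q :: "'q set" and Tpos Tzero :: "'q trans set"
    and sigp sigm :: "'q set \<Rightarrow> 'q trans list"
    and \<alpha> \<beta> :: "'q conf"
  assumes "wf_ocs Q Tpos Tzero"
    and "good_choice Q Tpos sigp sigm"
    and "fst \<alpha> \<in> Q" and "snd \<alpha> = 0" and "fst \<beta> \<in> Q" and "snd \<beta> = 0"
    and "\<exists>ts. is_arc Tpos Tzero \<alpha> ts \<and> target \<alpha> ts = \<beta>"
  shows "\<exists>ts. is_arc Tpos Tzero \<alpha> ts \<and> target \<alpha> ts = \<beta> \<and>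
    (low (card Q) \<alpha> ts \<or>
     (\<exists>S T ts1 ts2 ts3 ts4 ts5.
        normal_decomp Q Tpos sigp sigm S T \<alpha> ts ts1 ts2 ts3 ts4 ts5 \<and>
        (\<exists>a b A B :: nat.
           ts2 = concat (replicate a (sigp S)) \<and> eff (sigp S) = int A \<and>
           ts4 = concat (replicate b (sigm T)) \<and> eff (sigm T) = - int B \<and>
           a * A \<le> 2 * length ts3 + 2 * lcm A B \<and>
           b * B \<le> 2 * length ts3 + 2 * lcm A B \<and>
           (\<forall>u v w. ts3 = u @ v @ w \<longrightarrow> \<not> (is_cycle Tpos v \<and> int (gcd A B) dvd eff v)) \<and>
           snd (target \<alpha> (ts1 @ ts2)) > card Q \<and>
           snd (target \<alpha> (ts1 @ ts2 @ ts3)) > card Q \<and>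
           distinct (confs \<alpha> ts1 @ confs (target \<alpha> (ts1 @ ts2 @ ts3 @ ts4)) ts5))))"
proof (cases "\<exists>ts. is_arc Tpos Tzero \<alpha> ts \<and> target \<alpha> ts = \<beta> \<and> low (card Q) \<alpha> ts")
  case True then show ?thesis by blast
next
  case False
  interpret ocs2 Q Tpos Tzero sigp sigm \<alpha> \<beta>
    by unfold_locales (use assms False in auto)
  obtain \<rho> where \<rho>: "is_arc Tpos Tzero \<alpha> \<rho>" "target \<alpha> \<rho> = \<beta>" using assms(7) by blast
  define Cs where "Cs = {(S,T,u,a,m,b,w,c1,c2,c3,c4) | S T u a m b w c1 c2 c3 c4. candc S T u a m b w c1 c2 c3 c4}"
  define mu where "mu = (\<lambda>(S::'q set,T::'q set,u::'q trans list,a::nat,m::'q trans list,b::nat,w::'q trans list,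
      c1::nat,c2::nat,c3::nat,c4::nat). (length m, a + b, length u + length w))"
  define R where "R = inv_image (less_than <*lex*> less_than <*lex*> less_than) mu"
  have wfR: "wf R" unfolding R_def by (intro wf_inv_image wf_lex_prod wf_less_than)
  obtain S T u a m b w c1 c2 c3 c4 where c0: "candc S T u a m b w c1 c2 c3 c4" using init_cand[OF \<rho>] by blast
  have "(S,T,u,a,m,b,w,c1,c2,c3,c4) \<in> Cs" using c0 unfolding Cs_def by blast
  then obtain z where z: "z \<in> Cs" and zmin: "\<And>y. (y, z) \<in> R \<Longrightarrow> y \<notin> Cs" using wfE_min[OF wfR] by metis
  obtain S T u a m b w c1 c2 c3 c4 where zz: "z = (S,T,u,a,m,b,w,c1,c2,c3,c4)" "candc S T u a m b w c1 c2 c3 c4"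
    using z unfolding Cs_def by blast
  have mn: "\<not> lexl (length m', a' + b', length u' + length w') (length m, a + b, length u + length w)"
    if "candc S' T' u' a' m' b' w' c1' c2' c3' c4'" for S' T' u' a' m' b' w' c1' c2' c3' c4'
  proof
    assume l: "lexl (length m', a' + b', length u' + length w') (length m, a + b, length u + length w)"
    have "((S',T',u',a',m',b',w',c1',c2',c3',c4'), z) \<in> R"
      using l zz(1) unfolding R_def lexl_def mu_def by simp
    moreover have "(S',T',u',a',m',b',w',c1',c2',c3',c4') \<in> Cs" using that unfolding Cs_def by blast
    ultimately show False using zmin by blast
  qed
  have H: "\<forall>S' T' u' a' m' b' w' c1' c2' c3' c4'. candc S' T' u' a' m' b' w' c1' c2' c3' c4' \<longrightarrow>
       \<not> lexl (length m', a' + b', length u' + length w') (length m, a + b, length u + length w)"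
    by (intro allI impI) (rule mn)
  show ?thesis by (rule ex_weaken[OF final[OF zz(2) H]])
qed


end
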